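(* Fix an equation $(f,q,w)$ as in the context; let $\xi$, $\mathbf S_{\alpha,\beta}$ and $\lambda_n(\alpha,\beta)$ be as in the context. Then: (i) if $\alpha_0\in(0,\xi)$, $\beta_0\in(0,\pi)$: for each $0\le n\le N-2$, $\lambda_n(\alpha_0,\beta_0)$ is strictly less than each of $\lambda_n(0,\beta_0)$, $\lambda_n(\alpha_0,\pi)$, each of which is strictly less than $\lambda_{n+1}(\alpha_0,\beta_0)$; and $\lambda_{N-1}(\alpha_0,\beta_0)<\lambda_{N-1}(0,\beta_0)$; (ii) if $\alpha_0\in(\xi,\pi)$, $\beta_0\in(0,\pi)$: $\lambda_0(0,\beta_0)<\lambda_0(\alpha_0,\beta_0)$, and for each $0\le n\le N-2$, $\lambda_n(\alpha_0,\beta_0)$ is strictly less than each of $\lambda_{n+1}(0,\beta_0)$, $\lambda_n(\alpha_0,\pi)$, each of which is strictly less than $\lambda_{n+1}(\alpha_0,\beta_0)$; (iii) if $\alpha_0=\xi$, $\beta_0\in(0,\pi)$: $\lambda_0(0,\beta_0)<\lambda_0(\xi,\beta_0)$, for each $0\le n\le N-3$, $\lambda_n(\xi,\beta_0)$ is strictly less than each of $\lambda_{n+1}(0,\beta_0)$, $\lambda_n(\xi,\pi)$, each of which is strictly less than $\lambda_{n+1}(\xi,\beta_0)$; and $\lambda_{N-2}(\xi,\beta_0)<\lambda_{N-1}(0,\beta_0)$; (iv) if $\alpha_0\in(0,\xi)$: $\lambda_0(\alpha_0,\pi)<\lambda_0(0,\pi)<\lambda_1(\alpha_0,\pi)<\lambda_1(0,\pi)<\cdots<\lambda_{N-2}(\alpha_0,\pi)<\lambda_{N-2}(0,\pi)$;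 (v) if $\alpha_0\in(\xi,\pi)$: $\lambda_0(0,\pi)<\lambda_0(\alpha_0,\pi)<\lambda_1(0,\pi)<\lambda_1(\alpha_0,\pi)<\cdots<\lambda_{N-2}(0,\pi)<\lambda_{N-2}(\alpha_0,\pi)$; (vi) $\lambda_0(0,\pi)<\lambda_0(\xi,\pi)<\lambda_1(0,\pi)<\cdots<\lambda_{N-3}(0,\pi)<\lambda_{N-3}(\xi,\pi)<\lambda_{N-2}(0,\pi)$; (vii) if $\beta_0\in(0,\pi)$: $\lambda_0(0,\beta_0)<\lambda_0(0,\pi)<\lambda_1(0,\beta_0)<\cdots<\lambda_{N-2}(0,\beta_0)<\lambda_{N-2}(0,\pi)<\lambda_{N-1}(0,\beta_0)$.
   Context: Let $N\ge2$ be an integer. An equation is given by real sequences $f=\{f_n\}_{n=0}^N$, $q=\{q_n\}_{n=1}^N$, $w=\{w_n\}_{n=1}^N$ with $f_n\neq0$ ($0\le n\le N$), $w_n>0$ ($1\le n\le N$); it is $-\nabla(f_n\Delta y_n)+q_ny_n=\lambda w_ny_n$, $1\le n\le N$, for $y=\{y_n\}_{n=0}^{N+1}$, $\Delta y_n=y_{n+1}-y_n$, $\nabla y_n=y_n-y_{n-1}$. For $\alpha\in[0,\pi)$, $\beta\in(0,\pi]$, $\mathbf S_{\alpha,\beta}$ is the boundary condition $\cos\alpha\,y_0-\sin\alpha\,f_0\Delta y_0=0$, $\cos\beta\,y_N-\sin\beta\,f_N\Delta y_N=0$. An eigenvalue is $\lambda\in\mathbb C$ for which the equation with this boundary condition has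 a nontrivial solution; all are real, the multiplicity is the dimension of the solution space (equal to the multiplicity as zero of the characteristic polynomial), and counted with multiplicity they are ordered $\lambda_0(\alpha,\beta)\le\lambda_1(\alpha,\beta)\le\cdots$. Put $\xi:=\arctan(-1/f_0)+\pi$ if $f_0>0$, $\xi:=\arctan(-1/f_0)$ if $f_0<0$. The problem with $\mathbf S_{\alpha,\beta}$ has $N$ eigenvalues if $\alpha\ne\xi,\beta\ne\pi$, $N-1$ if exactly one of $\alpha=\xi$, $\beta=\pi$ holds, and $N-2$ if both hold. *)

theory Defs
  imports "HOL-Analysis.Analysis" "HOL-Library.Function_Algebras" "HOL-Library.Multiset"
begin

text \<open>Sequences y = (y_0,...,y_{N+1}) are represented as functions nat => complex
  that vanish for indices > N+1.\<close>

definition sl_eq ::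
  "nat \<Rightarrow> (nat \<Rightarrow> real) \<Rightarrow> (nat \<Rightarrow> real) \<Rightarrow> (nat \<Rightarrow> real) \<Rightarrow> complex \<Rightarrow> (nat \<Rightarrow> complex) \<Rightarrow> bool"
  where "sl_eq N f q w lm y \<longleftrightarrow>
    (\<forall>n\<in>{1..N}.
       - (of_real (f n) * (y (n+1) - y n) - of_real (f (n-1)) * (y n - y (n-1)))
       + of_real (q n) * y n = lm * of_real (w n) * y n)"

definition sl_bc ::
  "nat \<Rightarrow> (nat \<Rightarrow> real) \<Rightarrow> real \<Rightarrow> real \<Rightarrow> (nat \<Rightarrow> complex) \<Rightarrow> bool"
  where "sl_bc N f \<alpha> \<beta> y \<longleftrightarrow>
    of_real (cos \<alpha>) * y 0 - of_real (sin \<alpha>) * of_real (f 0) * (y 1 - y 0) = 0 \<and>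
    of_real (cos \<beta>) * y N - of_real (sin \<beta>) * of_real (f N) * (y (N+1) - y N) = 0"

definition sl_solutions ::
  "nat \<Rightarrow> (nat \<Rightarrow> real) \<Rightarrow> (nat \<Rightarrow> real) \<Rightarrow> (nat \<Rightarrow> real) \<Rightarrow> real \<Rightarrow> real \<Rightarrow> complex \<Rightarrow> (nat \<Rightarrow> complex) set"
  where "sl_solutions N f q w \<alpha> \<beta> lm =
    {y. (\<forall>n>N+1. y n = 0) \<and> sl_eq N f q w lm y \<and> sl_bc N f \<alpha> \<beta> y}"

definition sl_is_eigenvalue ::
  "nat \<Rightarrow> (nat \<Rightarrow> real) \<Rightarrow> (nat \<Rightarrow> real) \<Rightarrow> (nat \<Rightarrow> real) \<Rightarrow> real \<Rightarrow> real \<Rightarrow> complex \<Rightarrow> bool"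
  where "sl_is_eigenvalue N f q w \<alpha> \<beta> lm \<longleftrightarrow> (\<exists>y\<in>sl_solutions N f q w \<alpha> \<beta> lm. y \<noteq> 0)"

definition sl_mult ::
  "nat \<Rightarrow> (nat \<Rightarrow> real) \<Rightarrow> (nat \<Rightarrow> real) \<Rightarrow> (nat \<Rightarrow> real) \<Rightarrow> real \<Rightarrow> real \<Rightarrow> complex \<Rightarrow> nat"
  where "sl_mult N f q w \<alpha> \<beta> lm =
    vector_space.dim (%(c::complex) (y::nat \<Rightarrow> complex). (%n. c * y n)) (sl_solutions N f q w \<alpha> \<beta> lm)"

definition sl_eigs_mset ::
  "nat \<Rightarrow> (nat \<Rightarrow> real) \<Rightarrow> (nat \<Rightarrow> real) \<Rightarrow> (nat \<Rightarrow> real) \<Rightarrow> real \<Rightarrow> real \<Rightarrow> complex multiset"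
  where "sl_eigs_mset N f q w \<alpha> \<beta> =
    (\<Sum>lm\<in>{lm. sl_is_eigenvalue N f q w \<alpha> \<beta> lm}. replicate_mset (sl_mult N f q w \<alpha> \<beta> lm) lm)"

text \<open>lambda_k(alpha,beta): the k-th eigenvalue (k = 0,1,...) in nondecreasing order,
  counted with multiplicity.  All eigenvalues are real, so Re is the identity on them.\<close>
definition sl_eig ::
  "nat \<Rightarrow> (nat \<Rightarrow> real) \<Rightarrow> (nat \<Rightarrow> real) \<Rightarrow> (nat \<Rightarrow> real) \<Rightarrow> real \<Rightarrow> real \<Rightarrow> nat \<Rightarrow> real"
  where "sl_eig N f q w \<alpha> \<beta> k =
    sorted_list_of_multiset (image_mset Re (sl_eigs_mset N f q w \<alpha> \<beta>)) ! k"

definition sl_xi :: "(nat \<Rightarrow> real) \<Rightarrow> real"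
  where "sl_xi f = (if f 0 > 0 then arctan (-1 / f 0) + pi else arctan (-1 / f 0))"

end

theory Submission
  imports Defs "HOL-Computational_Algebra.Fundamental_Theorem_Algebra"
begin


lemma sc_nz: "sin (x::real) \<noteq> 0 \<or> cos x \<noteq> 0"
  using sin_cos_squared_add[of x] by (auto simp del: sin_cos_squared_add)

locale slp =
  fixes N :: nat and f q w :: "nat \<Rightarrow> real"
  assumes N2: "N \<ge> 2" and f_nz: "\<And>n. n \<le> N \<Longrightarrow> f n \<noteq> 0"
    and w_pos: "\<And>n. 1 \<le> n \<Longrightarrow> n \<le> N \<Longrightarrow> w n > 0"
begin

fun sol :: "real poly \<Rightarrow> real poly \<Rightarrow> nat \<Rightarrow> real poly \<times> real poly" where
  "sol a b 0 = (a, b)"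
| "sol a b (Suc n) = (let y = fst (sol a b n) + [:1 / f n:] * (snd (sol a b n))
      in (y, snd (sol a b n) + [:q (Suc n), - w (Suc n):] * y))"

definition Y where "Y a b n = fst (sol a b n)"
definition U where "U a b n = snd (sol a b n)"

lemma Y0[simp]: "Y a b 0 = a" and U0[simp]: "U a b 0 = b"
  by (simp_all add: Y_def U_def)

lemma Y_Suc: "Y a b (Suc n) = Y a b n + [:1/f n:] * (U a b n)"
  by (simp add: Y_def U_def Let_def)

lemma U_Suc: "U a b (Suc n) = U a b n + [:q (Suc n), - w (Suc n):] * Y a b (Suc n)"
  by (simp add: Y_def U_def Let_def)

definition Zq where "Zq a b n = Y a b n * pderiv (U a b n) - pderiv (Y a b n) * U a b n"

lemma Zq_Suc: "Zq a b (Suc n) = Zq a b n - smult (w (Suc n)) ((Y a b (Suc n))^2)"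
proof -
  define y where "y = Y a b n"
  define u where "u = U a b n"
  define c where "c = 1 / f n"
  define g where "g = [:q (Suc n), - w (Suc n):]"
  have Y1: "Y a b (Suc n) = y + [:c:] * u" by (simp add: Y_Suc y_def u_def c_def)
  have U1: "U a b (Suc n) = u + g * (y + [:c:] * u)" by (simp add: U_Suc Y1 u_def g_def)
  have pg: "pderiv g = [:- w (Suc n):]" by (simp add: g_def pderiv_pCons)
  show ?thesis unfolding Zq_def Y1 U1
    unfolding y_def[symmetric] u_def[symmetric]
    by (simp add: pderiv_add pderiv_mult pderiv_smult pg pderiv_pCons algebra_simps power2_eq_square smult_add_right smult_diff_right)
qed

definition Sig where "Sig a b n = (\<Sum>k\<in>{1..n}. smult (w k) ((Y a b k)^2))"

lemma Zq_sum: "Zq a b n = Zq a b 0 - Sig a b n"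
proof (induction n)
  case 0 then show ?case by (simp add: Sig_def)
next
  case (Suc n) then show ?case by (simp add: Zq_Suc Sig_def)
qed

lemma det_const: "Y a b n * U c d n - Y c d n * U a b n = a * d - c * b"
proof (induction n)
  case 0 then show ?case by simp
next
  case (Suc n)
  let ?c = "[:1/f n:]" and ?g = "[:q (Suc n), - w (Suc n):]"
  have "\<And>y1 u1 y2 u2 c g :: real poly. (y1 + c*u1)*(u2 + g*(y2 + c*u2)) - (y2 + c*u2) * (u1 + g*(y1 + c*u1)) = y1*u2 - y2*u1"
    by (simp add: algebra_simps)
  from this[of "Y a b n" ?c "U a b n" "U c d n" ?g "Y c d n"] Suc show ?case by (simp add: U_Suc Y_Suc)
qed

lemma lin: "Y (p*a1 + r*a2) (p*b1 + r*b2) n = p * Y a1 b1 n + r * Y a2 b2 n \<and>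
            U (p*a1 + r*a2) (p*b1 + r*b2) n = p * U a1 b1 n + r * U a2 b2 n"
proof (induction n)
  case 0 then show ?case by simp
next
  case (Suc n)
  let ?c = "[:1/f n:]" and ?g = "[:q (Suc n), - w (Suc n):]"
  from Suc show ?case unfolding U_Suc Y_Suc by (simp add: algebra_simps)
qed

end

context slp begin

definition DD :: "real poly \<Rightarrow> real poly \<Rightarrow> real \<Rightarrow> real poly" where
  "DD a b \<beta> = smult (cos \<beta>) (Y a b N) - smult (sin \<beta>) (U a b N)"
definition L where "L \<alpha> \<beta> = DD [:sin \<alpha>:] [:cos \<alpha>:] \<beta>"
definition DC where "DC \<beta> = DD 1 0 \<beta>"
definition DS where "DS \<beta> = DD 0 1 \<beta>"

lemma lin1: "Y a b n = a * Y 1 0 n + b * Y 0 1 n \<and> U a b n = a * U 1 0 n + b * U 0 1 n"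
  using lin[of a 1 b 0 0 1 n] by simp

lemma aux_lin: "smult cb (smult sa Yc + smult ca Ys) - smult sb (smult sa Uc + smult ca Us) =
   smult sa (smult cb Yc - smult sb Uc) + smult ca (smult cb Ys - smult sb Us)" for Yc Ys Uc Us :: "real poly"
  by (simp add: smult_add_right smult_diff_right algebra_simps)

lemma aux_W: "(smult sa C + smult ca S) * (smult sa' C' + smult ca' S') - (smult sa C' + smult ca S') * (smult sa' C + smult ca' S)
  = smult (sa * ca' - ca * sa') (C * S' - C' * S)" for C S C' S' :: "real poly"
  by (simp add: algebra_simps smult_add_right smult_diff_right smult_add_left smult_diff_left)

lemma aux_psi1: "(smult cb Ys - smult sb Us) * Yc - (smult cb Yc - smult sb Uc) * Ys = smult (- sb) (Yc * Us - Ys * Uc)"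
  for Yc Ys Uc Us :: "real poly"
  by (simp add: algebra_simps smult_diff_right)

lemma aux_psi2: "(smult cb Ys - smult sb Us) * Uc - (smult cb Yc - smult sb Uc) * Us = smult (- cb) (Yc * Us - Ys * Uc)"
  for Yc Ys Uc Us :: "real poly"
  by (simp add: algebra_simps smult_diff_right)

lemma L_lin: "L \<alpha> \<beta> = smult (sin \<alpha>) (DC \<beta>) + smult (cos \<alpha>) (DS \<beta>)"
proof -
  have y: "Y [:sin \<alpha>:] [:cos \<alpha>:] N = smult (sin \<alpha>) (Y 1 0 N) + smult (cos \<alpha>) (Y 0 1 N)"
    using lin1[of "[:sin \<alpha>:]" "[:cos \<alpha>:]" N] by simp
  have u: "U [:sin \<alpha>:] [:cos \<alpha>:] N = smult (sin \<alpha>) (U 1 0 N) + smult (cos \<alpha>) (U 0 1 N)"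
    using lin1[of "[:sin \<alpha>:]" "[:cos \<alpha>:]" N] by simp
  show ?thesis unfolding L_def DC_def DS_def DD_def y u by (rule aux_lin)
qed

lemma det1: "Y 1 0 n * U 0 1 n - Y 0 1 n * U 1 0 n = 1"
  using det_const[of 1 0 n 0 1] by simp

lemma psiN: "Y (DS \<beta>) (- DC \<beta>) N = [:- sin \<beta>:] \<and> U (DS \<beta>) (- DC \<beta>) N = [:- cos \<beta>:]"
proof -
  have d: "Y 1 0 N * U 0 1 N - Y 0 1 N * U 1 0 N = 1" by (rule det1)
  have "Y (DS \<beta>) (- DC \<beta>) N = DS \<beta> * Y 1 0 N - DC \<beta> * Y 0 1 N" using lin1[of "DS \<beta>" "- DC \<beta>" N] by simp
  also have "\<dots> = smult (- sin \<beta>) (Y 1 0 N * U 0 1 N - Y 0 1 N * U 1 0 N)"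
    unfolding DS_def DC_def DD_def by (rule aux_psi1)
  finally have 1: "Y (DS \<beta>) (- DC \<beta>) N = [:- sin \<beta>:]" unfolding d by simp
  have "U (DS \<beta>) (- DC \<beta>) N = DS \<beta> * U 1 0 N - DC \<beta> * U 0 1 N" using lin1[of "DS \<beta>" "- DC \<beta>" N] by simp
  also have "\<dots> = smult (- cos \<beta>) (Y 1 0 N * U 0 1 N - Y 0 1 N * U 1 0 N)"
    unfolding DS_def DC_def DD_def by (rule aux_psi2)
  finally have 2: "U (DS \<beta>) (- DC \<beta>) N = [:- cos \<beta>:]" unfolding d by simp
  from 1 2 show ?thesis by simp
qed

lemma psi_Z: "pderiv (DS \<beta>) * DC \<beta> - DS \<beta> * pderiv (DC \<beta>) = Sig (DS \<beta>) (- DC \<beta>) N"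
proof -
  have "Zq (DS \<beta>) (- DC \<beta>) N = 0" unfolding Zq_def using psiN[of \<beta>] by (simp add: pderiv_pCons)
  with Zq_sum[of "DS \<beta>" "- DC \<beta>" N] show ?thesis by (simp add: Zq_def pderiv_minus algebra_simps)
qed

lemma WA: "L \<alpha> \<beta> * pderiv (L \<alpha>' \<beta>) - pderiv (L \<alpha> \<beta>) * L \<alpha>' \<beta>
   = smult (sin (\<alpha> - \<alpha>')) (Sig (DS \<beta>) (- DC \<beta>) N)"
proof -
  have p: "pderiv (L a \<beta>) = smult (sin a) (pderiv (DC \<beta>)) + smult (cos a) (pderiv (DS \<beta>))" for a
    unfolding L_lin by (simp add: pderiv_add pderiv_smult)
  have "L \<alpha> \<beta> * pderiv (L \<alpha>' \<beta>) - pderiv (L \<alpha> \<beta>) * L \<alpha>' \<beta> =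
     smult (sin \<alpha> * cos \<alpha>' - cos \<alpha> * sin \<alpha>') (DC \<beta> * pderiv (DS \<beta>) - pderiv (DC \<beta>) * DS \<beta>)"
    unfolding p unfolding L_lin by (rule aux_W)
  also have "DC \<beta> * pderiv (DS \<beta>) - pderiv (DC \<beta>) * DS \<beta> = Sig (DS \<beta>) (- DC \<beta>) N"
    using psi_Z[of \<beta>] by (simp add: mult.commute)
  also have "sin \<alpha> * cos \<alpha>' - cos \<alpha> * sin \<alpha>' = sin (\<alpha> - \<alpha>')" by (simp add: sin_diff)
  finally show ?thesis .
qed

lemma WB: "L \<alpha> \<beta> * pderiv (L \<alpha> \<beta>') - pderiv (L \<alpha> \<beta>) * L \<alpha> \<beta>'
   = smult (sin (\<beta>' - \<beta>)) (Sig [:sin \<alpha>:] [:cos \<alpha>:] N)"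
proof -
  let ?y = "Y [:sin \<alpha>:] [:cos \<alpha>:] N" and ?u = "U [:sin \<alpha>:] [:cos \<alpha>:] N"
  have z: "?y * pderiv ?u - pderiv ?y * ?u = - Sig [:sin \<alpha>:] [:cos \<alpha>:] N"
    using Zq_sum[of "[:sin \<alpha>:]" "[:cos \<alpha>:]" N] by (simp add: Zq_def pderiv_pCons)
  have l: "L \<alpha> b = smult (cos b) ?y + smult (- sin b) ?u" for b
    by (simp add: L_def DD_def)
  have p: "pderiv (L \<alpha> b) = smult (cos b) (pderiv ?y) + smult (- sin b) (pderiv ?u)" for b
    unfolding l by (simp add: pderiv_add pderiv_diff pderiv_smult pderiv_minus)
  have "L \<alpha> \<beta> * pderiv (L \<alpha> \<beta>') - pderiv (L \<alpha> \<beta>) * L \<alpha> \<beta>' =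
     smult (cos \<beta> * (- sin \<beta>') - (- sin \<beta>) * cos \<beta>') (?y * pderiv ?u - pderiv ?y * ?u)"
    unfolding p unfolding l by (rule aux_W)
  also note z
  also have "cos \<beta> * (- sin \<beta>') - (- sin \<beta>) * cos \<beta>' = - sin (\<beta>' - \<beta>)" by (simp add: sin_diff)
  finally show ?thesis by (simp only: smult_minus_left smult_minus_right minus_minus)
qed

lemma all_zero:
  assumes "poly (Y a b 1) x = 0" "poly (Y a b 2) x = 0"
  shows "poly a x = 0 \<and> poly b x = 0 \<and> poly (Y a b N) x = 0 \<and> poly (U a b N) x = 0"
proof -
  have f1: "f 1 \<noteq> 0" using f_nz N2 by simp
  have f0: "f 0 \<noteq> 0" using f_nz by simp
  have u1: "poly (U a b 1) x = 0"
    using assms Y_Suc[of a b 1] f1 by (simp add: numeral_2_eq_2)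
  have fw: "poly (Y a b n) x = 0 \<and> poly (U a b n) x = 0" if "n \<ge> 1" for n
    using that
  proof (induction n)
    case 0 then show ?case by simp
  next
    case (Suc n)
    show ?case
    proof (cases "n = 0")
      case True then show ?thesis using assms u1 by simp
    next
      case False
      with Suc have "poly (Y a b n) x = 0 \<and> poly (U a b n) x = 0" by simp
      then show ?thesis by (simp add: Y_Suc U_Suc)
    qed
  qed
  have "poly b x = 0" using u1 assms U_Suc[of a b 0] by simp
  moreover have "poly a x = 0" using assms(1) Y_Suc[of a b 0] \<open>poly b x = 0\<close> by simp
  ultimately show ?thesis using fw[of N] N2 by simp
qed

lemma Sig_nonneg: "poly (Sig a b N) x \<ge> 0"
  unfolding Sig_def poly_sum by (intro sum_nonneg) (simp add: w_pos less_imp_le)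

lemma Sig_pos:
  assumes "poly a x \<noteq> 0 \<or> poly b x \<noteq> 0 \<or> poly (Y a b N) x \<noteq> 0 \<or> poly (U a b N) x \<noteq> 0"
  shows "poly (Sig a b N) x > 0"
proof (rule ccontr)
  assume "\<not> ?thesis"
  then have "poly (Sig a b N) x = 0" using Sig_nonneg[of a b x] by linarith
  then have z: "(\<Sum>k\<in>{1..N}. w k * (poly (Y a b k) x)^2) = 0"
    unfolding Sig_def poly_sum by simp
  have "\<forall>k\<in>{1..N}. w k * (poly (Y a b k) x)^2 = 0"
    using z by (subst (asm) sum_nonneg_eq_0_iff) (auto simp: w_pos less_imp_le)
  moreover have "(1::nat) \<in> {1..N}" "(2::nat) \<in> {1..N}" using N2 by auto
  ultimately have "w 1 * (poly (Y a b 1) x)^2 = 0" "w 2 * (poly (Y a b 2) x)^2 = 0" by blast+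
  then have "poly (Y a b 1) x = 0" "poly (Y a b 2) x = 0" using N2 w_pos[of 1] w_pos[of 2] by auto
  from all_zero[OF this] assms show False by simp
qed

lemma Sig_phi_pos: "poly (Sig [:sin \<alpha>:] [:cos \<alpha>:] N) x > 0"
proof -
  have "sin \<alpha> \<noteq> 0 \<or> cos \<alpha> \<noteq> 0"
    using sc_nz[of \<alpha>] by simp
  then have h: "poly [:sin \<alpha>:] x \<noteq> 0 \<or> poly [:cos \<alpha>:] x \<noteq> 0" by simp
  show ?thesis by (rule Sig_pos) (use h in blast)
qed

lemma Sig_psi_pos: "poly (Sig (DS \<beta>) (- DC \<beta>) N) x > 0"
proof -
  have "sin \<beta> \<noteq> 0 \<or> cos \<beta> \<noteq> 0"
    using sc_nz[of \<beta>] by simp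
  then have h: "poly (Y (DS \<beta>) (- DC \<beta>) N) x \<noteq> 0 \<or> poly (U (DS \<beta>) (- DC \<beta>) N) x \<noteq> 0"
    using psiN[of \<beta>] by simp
  show ?thesis by (rule Sig_pos) (use h in blast)
qed

end


abbreviation cp :: "real poly \<Rightarrow> complex poly" where "cp p \<equiv> map_poly complex_of_real p"

lemma cp_add: "cp (p + r) = cp p + cp r"
  by (intro poly_eqI) (simp add: coeff_map_poly)
lemma cp_diff: "cp (p - r) = cp p - cp r"
  by (intro poly_eqI) (simp add: coeff_map_poly)
lemma cp_minus: "cp (- p) = - cp p"
  by (intro poly_eqI) (simp add: coeff_map_poly)
lemma cp_mult: "cp (p * r) = cp p * cp r"
  by (intro poly_eqI) (simp add: coeff_map_poly coeff_mult)
lemma cp_smult: "cp (smult c p) = smult (of_real c) (cp p)"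
  by (intro poly_eqI) (simp add: coeff_map_poly)
lemma cp_pCons: "cp (pCons c p) = pCons (of_real c) (cp p)"
  by (simp add: map_poly_pCons)
lemma cp_pderiv: "cp (pderiv p) = pderiv (cp p)"
  by (intro poly_eqI) (simp add: coeff_map_poly coeff_pderiv)
lemma poly_cp_real: "poly (cp p) (of_real x) = of_real (poly p x)"
  by (induction p) (auto simp: map_poly_pCons)
lemma cp_eq_0: "cp p = 0 \<longleftrightarrow> p = 0"
  by (simp add: map_poly_eq_0_iff)
lemma degree_cp: "degree (cp p) = degree p"
  by (simp add: degree_map_poly)

lemma cnj_step:
  fixes A B g :: complex and r :: real
  shows "cnj (A + of_real r * B) * (B + g * (A + of_real r * B)) - (A + of_real r * B) * cnj (B + g * (A + of_real r * B))
     = (cnj A * B - A * cnj B) + (g - cnj g) * (cnj (A + of_real r * B) * (A + of_real r * B))"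
  by (simp add: algebra_simps)

context slp begin

definition ye where "ye \<alpha> z n = poly (cp (Y [:sin \<alpha>:] [:cos \<alpha>:] n)) z"
definition ue where "ue \<alpha> z n = poly (cp (U [:sin \<alpha>:] [:cos \<alpha>:] n)) z"

lemma ye0: "ye \<alpha> z 0 = of_real (sin \<alpha>)" and ue0: "ue \<alpha> z 0 = of_real (cos \<alpha>)"
  by (simp_all add: ye_def ue_def map_poly_pCons)

lemma ye_Suc: "ye \<alpha> z (Suc n) = ye \<alpha> z n + of_real (1 / f n) * ue \<alpha> z n"
  by (simp add: ye_def ue_def Y_Suc cp_add cp_mult cp_smult map_poly_pCons)

lemma ue_Suc: "ue \<alpha> z (Suc n) = ue \<alpha> z n + (of_real (q (Suc n)) - z * of_real (w (Suc n))) * ye \<alpha> z (Suc n)"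
  by (simp add: ye_def ue_def U_Suc[of _ _ n] cp_add cp_mult cp_smult cp_minus map_poly_pCons algebra_simps)

lemma poly_cpL: "poly (cp (L \<alpha> \<beta>)) z = of_real (cos \<beta>) * ye \<alpha> z N - of_real (sin \<beta>) * ue \<alpha> z N"
  by (simp add: L_def DD_def cp_diff cp_smult ye_def ue_def)

lemma ye_ue_not0: "ye \<alpha> z 0 \<noteq> 0 \<or> ye \<alpha> z 1 \<noteq> 0"
proof (rule ccontr)
  assume "\<not> ?thesis"
  then have "sin \<alpha> = 0" "ye \<alpha> z 1 = 0" by (auto simp: ye0)
  then have "cos \<alpha> = 0" using ye_Suc[of \<alpha> z 0] f_nz[of 0] by (simp add: ye0 ue0)
  with \<open>sin \<alpha> = 0\<close> show False
    using sc_nz[of \<alpha>] by simp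
qed

definition phi where "phi \<alpha> z = (\<lambda>n. if n \<le> N + 1 then ye \<alpha> z n else 0)"

lemma phi_sol: "poly (cp (L \<alpha> \<beta>)) z = 0 \<Longrightarrow> phi \<alpha> z \<in> sl_solutions N f q w \<alpha> \<beta> z"
proof -
  assume h: "poly (cp (L \<alpha> \<beta>)) z = 0"
  have eq: "sl_eq N f q w z (phi \<alpha> z)"
    unfolding sl_eq_def
  proof
    fix n assume n: "n \<in> {1..N}"
    then obtain m where m: "n = Suc m" by (cases n) auto
    have fm: "f m \<noteq> 0" "f n \<noteq> 0" using f_nz n m by auto
    have a: "of_real (f n) * (ye \<alpha> z (n+1) - ye \<alpha> z n) = ue \<alpha> z n"
      using ye_Suc[of \<alpha> z n] fm by (simp add: field_simps)
    have b: "of_real (f m) * (ye \<alpha> z n - ye \<alpha> z m) = ue \<alpha> z m"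
      using ye_Suc[of \<alpha> z m] fm m by (simp add: field_simps)
    show "- (of_real (f n) * (phi \<alpha> z (n+1) - phi \<alpha> z n) - of_real (f (n-1)) * (phi \<alpha> z n - phi \<alpha> z (n-1)))
       + of_real (q n) * phi \<alpha> z n = z * of_real (w n) * phi \<alpha> z n"
      using n a b ue_Suc[of \<alpha> z m] m by (simp add: phi_def algebra_simps)
  qed
  have bc: "sl_bc N f \<alpha> \<beta> (phi \<alpha> z)"
  proof -
    have a: "of_real (f N) * (ye \<alpha> z (N+1) - ye \<alpha> z N) = ue \<alpha> z N"
      using ye_Suc[of \<alpha> z N] f_nz[of N] by (simp add: field_simps)
    have b: "of_real (f 0) * (ye \<alpha> z 1 - ye \<alpha> z 0) = ue \<alpha> z 0"
      using ye_Suc[of \<alpha> z 0] f_nz[of 0] by (simp add: field_simps)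
    show ?thesis unfolding sl_bc_def using a b h poly_cpL[of \<alpha> \<beta> z]
      by (simp add: phi_def ye0 ue0 algebra_simps)
  qed
  show ?thesis unfolding sl_solutions_def using eq bc by (simp add: phi_def)
qed

lemma phi_nz: "phi \<alpha> z \<noteq> 0"
proof
  assume "phi \<alpha> z = 0"
  then have "phi \<alpha> z 0 = 0" "phi \<alpha> z 1 = 0" by simp_all
  then show False using ye_ue_not0[of \<alpha> z] by (simp add: phi_def)
qed

lemma sol_mult:
  assumes y: "y \<in> sl_solutions N f q w \<alpha> \<beta> z"
  defines "c \<equiv> of_real (sin \<alpha>) * y 0 + of_real (cos \<alpha>) * (of_real (f 0) * (y 1 - y 0))"
  shows "y = (\<lambda>n. c * phi \<alpha> z n) \<and> c * poly (cp (L \<alpha> \<beta>)) z = 0"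
proof -
  from y have eq: "sl_eq N f q w z y" and bc: "sl_bc N f \<alpha> \<beta> y" and zr: "\<forall>n>N+1. y n = 0"
    by (auto simp: sl_solutions_def)
  define u where "u n = of_real (f n) * (y (n+1) - y n)" for n
  have sc: "(of_real (sin \<alpha>))^2 + (of_real (cos \<alpha>))^2 = (1::complex)"
    by (simp flip: of_real_power of_real_add)
  have bc0: "of_real (cos \<alpha>) * y 0 = of_real (sin \<alpha>) * u 0"
    using bc by (simp add: sl_bc_def u_def)
  have ind: "y n = c * ye \<alpha> z n \<and> u n = c * ue \<alpha> z n" if "n \<le> N" for n
    using that
  proof (induction n)
    case 0
    let ?S = "complex_of_real (sin \<alpha>)" and ?C = "complex_of_real (cos \<alpha>)"
    have cdef: "c = ?S * y 0 + ?C * u 0" by (simp add: c_def u_def)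
    have sc2: "?S * ?S + ?C * ?C = 1" using sc by (simp add: power2_eq_square)
    have "c * ?S = ?S * ?S * y 0 + ?C * (?S * u 0)" unfolding cdef by (simp add: algebra_simps)
    also have "?S * u 0 = ?C * y 0" using bc0 by simp
    also have "?S * ?S * y 0 + ?C * (?C * y 0) = (?S * ?S + ?C * ?C) * y 0" by (simp add: algebra_simps)
    finally have a: "y 0 = c * ?S" using sc2 by simp
    have "c * ?C = ?S * (?C * y 0) + ?C * ?C * u 0" unfolding cdef by (simp add: algebra_simps)
    also have "?C * y 0 = ?S * u 0" using bc0 by simp
    also have "?S * (?S * u 0) + ?C * ?C * u 0 = (?S * ?S + ?C * ?C) * u 0" by (simp add: algebra_simps)
    finally have b: "u 0 = c * ?C" using sc2 by simp
    from a b show ?case by (simp add: ye0 ue0)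
  next
    case (Suc n)
    then have IH: "y n = c * ye \<alpha> z n" "u n = c * ue \<alpha> z n" by auto
    have fn: "f n \<noteq> 0" using f_nz Suc by simp
    have y1: "y (Suc n) = c * ye \<alpha> z (Suc n)"
      using IH fn unfolding ye_Suc u_def by (simp add: field_simps)
    have "Suc n \<in> {1..N}" using Suc by simp
    with eq have "- (of_real (f (Suc n)) * (y (Suc n + 1) - y (Suc n)) - of_real (f n) * (y (Suc n) - y n))
       + of_real (q (Suc n)) * y (Suc n) = z * of_real (w (Suc n)) * y (Suc n)"
      unfolding sl_eq_def by fastforce
    then have "u (Suc n) = u n + (of_real (q (Suc n)) - z * of_real (w (Suc n))) * y (Suc n)"
      unfolding u_def by (simp add: algebra_simps)
    then have "u (Suc n) = c * ue \<alpha> z (Suc n)" using IH y1 by (simp add: ue_Suc algebra_simps)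
    with y1 show ?case by simp
  qed
  have yN1: "y (N+1) = c * ye \<alpha> z (N+1)"
  proof -
    have fn: "f N \<noteq> 0" using f_nz by simp
    have "y (N+1) = y N + u N / of_real (f N)" using fn unfolding u_def by (simp add: field_simps)
    then show ?thesis using ind[of N] fn by (simp add: ye_Suc field_simps)
  qed
  have "y n = c * phi \<alpha> z n" for n
  proof (cases "n \<le> N")
    case True then show ?thesis using ind by (simp add: phi_def)
  next
    case False
    then show ?thesis using yN1 zr by (cases "n = N+1") (auto simp: phi_def)
  qed
  moreover have "c * poly (cp (L \<alpha> \<beta>)) z = 0"
  proof -
    have r: "of_real (cos \<beta>) * y N - of_real (sin \<beta>) * u N = 0"
      using bc by (simp add: sl_bc_def u_def mult.assoc)
    have "c * poly (cp (L \<alpha> \<beta>)) z = of_real (cos \<beta>) * (c * ye \<alpha> z N) - of_real (sin \<beta>) * (c * ue \<alpha> z N)"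
      by (simp add: poly_cpL algebra_simps)
    also have "\<dots> = 0" using ind[of N] r by simp
    finally show ?thesis .
  qed
  ultimately show ?thesis by auto
qed

lemma eigen_iff: "sl_is_eigenvalue N f q w \<alpha> \<beta> z \<longleftrightarrow> poly (cp (L \<alpha> \<beta>)) z = 0"
proof
  assume "sl_is_eigenvalue N f q w \<alpha> \<beta> z"
  then obtain y where y: "y \<in> sl_solutions N f q w \<alpha> \<beta> z" "y \<noteq> 0"
    unfolding sl_is_eigenvalue_def by auto
  from sol_mult[OF y(1)] obtain c where "y = (\<lambda>n. c * phi \<alpha> z n)" "c * poly (cp (L \<alpha> \<beta>)) z = 0" by blast
  with y(2) show "poly (cp (L \<alpha> \<beta>)) z = 0" by auto
next
  assume "poly (cp (L \<alpha> \<beta>)) z = 0"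
  then show "sl_is_eigenvalue N f q w \<alpha> \<beta> z"
    unfolding sl_is_eigenvalue_def using phi_sol phi_nz by blast
qed

end


interpretation cvs: vector_space "\<lambda>(c::complex) (y::nat\<Rightarrow>complex). (\<lambda>n. c * y n)"
  by unfold_locales (auto simp: algebra_simps fun_eq_iff)

context slp begin

lemma eigen_real:
  assumes h: "poly (cp (L \<alpha> \<beta>)) z = 0"
  shows "z = of_real (Re z)"
proof -
  define A where "A = ye \<alpha> z"
  define B where "B = ue \<alpha> z"
  define G where "G n = cnj (A n) * B n - A n * cnj (B n)" for n
  have Gs: "G n = G 0 - (z - cnj z) * (\<Sum>k\<in>{1..n}. of_real (w k) * (cnj (A k) * A k))" for n
  proof (induction n)
    case 0 then show ?case by simp
  next
    case (Suc n)
    let ?g = "of_real (q (Suc n)) - z * of_real (w (Suc n))"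
    have "G (Suc n) = G n + (?g - cnj ?g) * (cnj (A (Suc n)) * A (Suc n))"
      unfolding G_def A_def B_def ue_Suc[of \<alpha> z n] ye_Suc[of \<alpha> z n]
      by (rule cnj_step[unfolded G_def])
    then show ?case using Suc by (simp add: algebra_simps)
  qed
  have G0: "G 0 = 0" by (simp add: G_def A_def B_def ye0 ue0)
  have GN: "G N = 0"
  proof -
    have bc: "of_real (cos \<beta>) * A N = of_real (sin \<beta>) * B N"
      using h poly_cpL[of \<alpha> \<beta> z] by (simp add: A_def B_def)
    show ?thesis
    proof (cases "sin \<beta> = 0")
      case True
      then have "cos \<beta> \<noteq> 0" using sc_nz[of \<beta>] by simp
      with True bc have "A N = 0" by simp
      then show ?thesis by (simp add: G_def)
    next
      case False
      then have "B N = of_real (cos \<beta> / sin \<beta>) * A N" using bc by (simp add: field_simps)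
      then show ?thesis by (simp add: G_def)
    qed
  qed
  define S where "S = (\<Sum>k\<in>{1..N}. w k * (cmod (A k))^2)"
  have S_eq: "(\<Sum>k\<in>{1..N}. of_real (w k) * (cnj (A k) * A k)) = complex_of_real S"
    unfolding S_def of_real_sum
  proof (intro sum.cong refl)
    fix k
    have e: "complex_of_real ((cmod (A k))^2) = cnj (A k) * A k"
      using complex_norm_square[of "A k"] by (simp only: mult.commute)
    show "of_real (w k) * (cnj (A k) * A k) = complex_of_real (w k * (cmod (A k))^2)"
      by (simp only: of_real_mult e)
  qed
  have "A 1 \<noteq> 0 \<or> A 2 \<noteq> 0"
  proof (rule ccontr)
    assume "\<not> ?thesis"
    then have a: "A 1 = 0" "A 2 = 0" by auto
    have "B 1 = 0" using a ye_Suc[of \<alpha> z 1] f_nz[of 1] N2 by (simp add: A_def B_def numeral_2_eq_2)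
    then have "B 0 = 0" using a ue_Suc[of \<alpha> z 0] by (simp add: A_def B_def)
    then have "A 0 = 0" using a ye_Suc[of \<alpha> z 0] by (simp add: A_def B_def)
    with a ye_ue_not0[of \<alpha> z] show False by (simp add: A_def)
  qed
  then have "S > 0"
  proof -
    have nn: "\<forall>k\<in>{1..N}. 0 \<le> w k * (cmod (A k))^2" by (auto intro!: mult_nonneg_nonneg simp: w_pos less_imp_le)
    have "(1::nat) \<in> {1..N}" "(2::nat) \<in> {1..N}" using N2 by auto
    moreover have "w 1 * (cmod (A 1))^2 > 0 \<or> w 2 * (cmod (A 2))^2 > 0"
      using \<open>A 1 \<noteq> 0 \<or> A 2 \<noteq> 0\<close> w_pos[of 1] w_pos[of 2] N2 by auto
    ultimately show ?thesis unfolding S_def using nn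
      by (metis (no_types, lifting) finite_atLeastAtMost order_less_le sum_nonneg_eq_0_iff sum_nonneg)
  qed
  have "(z - cnj z) * complex_of_real S = 0" using Gs[of N] G0 GN S_eq by simp
  with \<open>S > 0\<close> have "z = cnj z" by simp
  then show ?thesis by (simp add: complex_eq_iff)
qed

lemma L_simple: "poly (L \<alpha> \<beta>) x = 0 \<Longrightarrow> poly (pderiv (L \<alpha> \<beta>)) x \<noteq> 0"
proof
  assume h: "poly (L \<alpha> \<beta>) x = 0" "poly (pderiv (L \<alpha> \<beta>)) x = 0"
  have "poly (L \<alpha> \<beta> * pderiv (L \<alpha> (\<beta> + pi/2)) - pderiv (L \<alpha> \<beta>) * L \<alpha> (\<beta> + pi/2)) x
     = poly (Sig [:sin \<alpha>:] [:cos \<alpha>:] N) x"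
    unfolding WB by simp
  with h Sig_phi_pos[of \<alpha> x] show False by simp
qed

lemma L_nz: "L \<alpha> \<beta> \<noteq> 0"
  using L_simple[of \<alpha> \<beta> 0] by auto

definition Zr where "Zr \<alpha> \<beta> = {x. poly (L \<alpha> \<beta>) x = 0}"

lemma Zr_finite: "finite (Zr \<alpha> \<beta>)"
  unfolding Zr_def using L_nz poly_roots_finite by blast

lemma Ec_eq: "{z. poly (cp (L \<alpha> \<beta>)) z = 0} = complex_of_real ` Zr \<alpha> \<beta>"
proof (intro equalityI subsetI)
  fix z assume "z \<in> {z. poly (cp (L \<alpha> \<beta>)) z = 0}"
  then have h: "poly (cp (L \<alpha> \<beta>)) z = 0" by simp
  then have "z = of_real (Re z)" by (rule eigen_real)
  with h have "poly (L \<alpha> \<beta>) (Re z) = 0" by (metis poly_cp_real of_real_eq_0_iff)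
  with \<open>z = of_real (Re z)\<close> show "z \<in> complex_of_real ` Zr \<alpha> \<beta>" unfolding Zr_def by blast
qed (auto simp: Zr_def poly_cp_real)

lemma card_Zr: "card (Zr \<alpha> \<beta>) = degree (L \<alpha> \<beta>)"
proof -
  let ?p = "cp (L \<alpha> \<beta>)"
  have rs: "rsquarefree ?p"
    unfolding rsquarefree_roots
  proof (intro allI notI)
    fix a assume a: "poly ?p a = 0 \<and> poly (pderiv ?p) a = 0"
    then have "a = of_real (Re a)" using eigen_real by blast
    with a have "poly (L \<alpha> \<beta>) (Re a) = 0" "poly (pderiv (L \<alpha> \<beta>)) (Re a) = 0"
      by (metis poly_cp_real of_real_eq_0_iff cp_pderiv)+
    with L_simple show False by blast
  qed
  have "degree ?p = degree (\<Prod>z|poly ?p z = 0. [:-z, 1:])"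
  proof -
    have "lead_coeff ?p \<noteq> 0" using L_nz cp_eq_0 by simp
    then show ?thesis
      by (subst (1) complex_poly_decompose_rsquarefree[OF rs, symmetric]) simp
  qed
  also have "\<dots> = card {z. poly ?p z = 0}"
    by (subst degree_prod_sum_eq) auto
  also have "\<dots> = card (Zr \<alpha> \<beta>)" unfolding Ec_eq by (rule card_image) (simp add: inj_on_def)
  finally show ?thesis by (simp add: degree_cp)
qed

lemma sol_space: "poly (cp (L \<alpha> \<beta>)) z = 0 \<Longrightarrow>
   sl_solutions N f q w \<alpha> \<beta> z = range (\<lambda>c. (\<lambda>n. c * phi \<alpha> z n))"
proof (intro equalityI subsetI)
  fix y assume "y \<in> sl_solutions N f q w \<alpha> \<beta> z"
  from sol_mult[OF this] show "y \<in> range (\<lambda>c. (\<lambda>n. c * phi \<alpha> z n))" by blast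
next
  fix y assume h: "poly (cp (L \<alpha> \<beta>)) z = 0" and "y \<in> range (\<lambda>c. (\<lambda>n. c * phi \<alpha> z n))"
  then obtain c where y: "y = (\<lambda>n. c * phi \<alpha> z n)" by blast
  from phi_sol[OF h] have P: "(\<forall>n>N+1. phi \<alpha> z n = 0)" "sl_eq N f q w z (phi \<alpha> z)" "sl_bc N f \<alpha> \<beta> (phi \<alpha> z)"
    by (auto simp: sl_solutions_def)
  have "sl_eq N f q w z y"
    unfolding sl_eq_def
  proof
    fix n assume n: "n \<in> {1..N}"
    with P(2) have e: "- (of_real (f n) * (phi \<alpha> z (n+1) - phi \<alpha> z n) - of_real (f (n-1)) * (phi \<alpha> z n - phi \<alpha> z (n-1)))
       + of_real (q n) * phi \<alpha> z n = z * of_real (w n) * phi \<alpha> z n" unfolding sl_eq_def by blast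
    have "- (of_real (f n) * (y (n+1) - y n) - of_real (f (n-1)) * (y n - y (n-1))) + of_real (q n) * y n
        = c * (- (of_real (f n) * (phi \<alpha> z (n+1) - phi \<alpha> z n) - of_real (f (n-1)) * (phi \<alpha> z n - phi \<alpha> z (n-1)))
       + of_real (q n) * phi \<alpha> z n)" unfolding y by (simp add: algebra_simps)
    also have "\<dots> = z * of_real (w n) * y n" unfolding e y by (simp add: algebra_simps)
    finally show "- (of_real (f n) * (y (n+1) - y n) - of_real (f (n-1)) * (y n - y (n-1))) + of_real (q n) * y n
        = z * of_real (w n) * y n" .
  qed
  moreover have "sl_bc N f \<alpha> \<beta> y"
  proof -
    have "of_real (cos \<alpha>) * y 0 - of_real (sin \<alpha>) * of_real (f 0) * (y 1 - y 0) =
      c * (of_real (cos \<alpha>) * phi \<alpha> z 0 - of_real (sin \<alpha>) * of_real (f 0) * (phi \<alpha> z 1 - phi \<alpha> z 0))"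
      unfolding y by (simp add: algebra_simps)
    moreover have "of_real (cos \<beta>) * y N - of_real (sin \<beta>) * of_real (f N) * (y (N+1) - y N) =
      c * (of_real (cos \<beta>) * phi \<alpha> z N - of_real (sin \<beta>) * of_real (f N) * (phi \<alpha> z (N+1) - phi \<alpha> z N))"
      unfolding y by (simp add: algebra_simps)
    ultimately show ?thesis using P(3) unfolding sl_bc_def by simp
  qed
  ultimately show "y \<in> sl_solutions N f q w \<alpha> \<beta> z" using P(1) by (simp add: sl_solutions_def y)
qed

lemma mult_1: "poly (cp (L \<alpha> \<beta>)) z = 0 \<Longrightarrow> sl_mult N f q w \<alpha> \<beta> z = 1"
proof -
  assume h: "poly (cp (L \<alpha> \<beta>)) z = 0"
  have "sl_solutions N f q w \<alpha> \<beta> z = cvs.span {phi \<alpha> z}"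
    unfolding sol_space[OF h] cvs.span_singleton by simp
  then have "sl_mult N f q w \<alpha> \<beta> z = cvs.dim {phi \<alpha> z}"
    unfolding sl_mult_def by simp
  also have "\<dots> = 1"
  proof -
    have "phi \<alpha> z \<notin> cvs.span {}" using phi_nz by (simp add: zero_fun_def)
    then have "cvs.independent {phi \<alpha> z}" using cvs.independent_insert[of "phi \<alpha> z" "{}"] cvs.independent_empty by simp
    then show ?thesis using cvs.dim_eq_card_independent by simp
  qed
  finally show ?thesis .
qed

lemma eig_eq: "sl_eig N f q w \<alpha> \<beta> k = sorted_list_of_set (Zr \<alpha> \<beta>) ! k"
proof -
  have "sl_eigs_mset N f q w \<alpha> \<beta> = (\<Sum>z\<in>{z. poly (cp (L \<alpha> \<beta>)) z = 0}. {#z#})"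
    unfolding sl_eigs_mset_def eigen_iff by (intro sum.cong) (auto simp: mult_1)
  also have "\<dots> = mset_set (complex_of_real ` Zr \<alpha> \<beta>)" by (simp add: Ec_eq)
  finally have "image_mset Re (sl_eigs_mset N f q w \<alpha> \<beta>) = image_mset Re (mset_set (complex_of_real ` Zr \<alpha> \<beta>))" by simp
  also have "\<dots> = mset_set (Re ` complex_of_real ` Zr \<alpha> \<beta>)"
    by (rule image_mset_mset_set) (auto simp: inj_on_def)
  also have "Re ` complex_of_real ` Zr \<alpha> \<beta> = Zr \<alpha> \<beta>" by (force simp: image_image)
  finally show ?thesis unfolding sl_eig_def by simp
qed

end


lemma xi_props:
  fixes f :: "nat \<Rightarrow> real"
  assumes f0: "f 0 \<noteq> 0"
  shows "0 < sl_xi f \<and> sl_xi f < pi \<and> sin (sl_xi f) + cos (sl_xi f) / f 0 = 0 \<and> cos (sl_xi f) \<noteq> 0"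
proof -
  define x where "x = -1 / f 0"
  define t where "t = arctan x"
  define s where "s = sqrt (1 + x^2)"
  have s: "s > 0" unfolding s_def by (simp add: add_pos_nonneg)
  have st: "sin t = x / s" "cos t = 1 / s" unfolding t_def s_def by (simp_all add: sin_arctan cos_arctan)
  have "sin t + cos t / f 0 = x / s + 1 / s / f 0" using st by simp
  also have "\<dots> = 0" by (simp add: x_def divide_divide_eq_left mult.commute)
  finally have e: "sin t + cos t / f 0 = 0" .
  have ct: "cos t > 0" using st s by simp
  have b: "- (pi/2) < t" "t < pi/2" unfolding t_def using arctan_bounded by auto
  show ?thesis
  proof (cases "f 0 > 0")
    case True
    then have "x < 0" by (simp add: x_def)
    then have "t < 0" by (simp add: t_def)
    have xi: "sl_xi f = t + pi" using True by (simp add: sl_xi_def t_def x_def)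
    have sc: "sin (t + pi) = - sin t" "cos (t + pi) = - cos t" by (simp_all add: sin_add cos_add)
    have "sin (t + pi) + cos (t + pi) / f 0 = - (sin t + cos t / f 0)" unfolding sc by simp
    then have "sin (t + pi) + cos (t + pi) / f 0 = 0" using e by simp
    moreover have "0 < t + pi" "t + pi < pi" using b \<open>t < 0\<close> by linarith+
    moreover have "cos (t + pi) \<noteq> 0" using sc ct by simp
    ultimately show ?thesis unfolding xi by blast
  next
    case False
    with f0 have "f 0 < 0" by simp
    then have "x > 0" by (simp add: x_def)
    then have "t > 0" by (simp add: t_def)
    have xi: "sl_xi f = t" using False by (simp add: sl_xi_def t_def x_def)
    have "t < pi" using b by linarith
    then show ?thesis unfolding xi using \<open>t > 0\<close> e ct by simp
  qed
qed

context slp begin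

abbreviation xi where "xi \<equiv> sl_xi f"

lemma xi_uniq:
  assumes "0 \<le> \<alpha>" "\<alpha> < pi" "sin \<alpha> + cos \<alpha> / f 0 = 0"
  shows "\<alpha> = xi"
proof -
  have f0: "f 0 \<noteq> 0" using f_nz by simp
  have X: "0 < xi" "xi < pi" "sin xi + cos xi / f 0 = 0" using xi_props[of f, OF f0] by blast+
  have a: "sin \<alpha> * f 0 = - cos \<alpha>"
  proof -
    have "(sin \<alpha> + cos \<alpha> / f 0) * f 0 = 0" using assms(3) by simp
    then show ?thesis using f0 by (simp add: distrib_right)
  qed
  have b: "sin xi * f 0 = - cos xi"
  proof -
    have "(sin xi + cos xi / f 0) * f 0 = 0" using X(3) by simp
    then show ?thesis using f0 by (simp add: distrib_right)
  qed
  have "f 0 * sin (\<alpha> - xi) = (sin \<alpha> * f 0) * cos xi - cos \<alpha> * (sin xi * f 0)"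
    by (simp add: sin_diff algebra_simps)
  also have "\<dots> = 0" unfolding a b by simp
  finally have "sin (\<alpha> - xi) = 0" using f0 by simp
  moreover have "- pi < \<alpha> - xi" "\<alpha> - xi < pi" using assms X by linarith+
  ultimately have "\<alpha> - xi = 0" using sin_eq_0_pi by blast
  then show ?thesis by simp
qed

lemma deg_step:
  assumes "Suc n \<le> N" "degree (Y a b n) < degree (U a b n)"
  shows "degree (Y a b (Suc n)) = degree (U a b n) \<and> degree (U a b (Suc n)) = Suc (degree (U a b n))"
proof -
  have fn: "f n \<noteq> 0" using f_nz assms by simp
  have wn: "w (Suc n) \<noteq> 0" using w_pos[of "Suc n"] assms by simp
  have U0: "U a b n \<noteq> 0" using assms(2) by auto
  have d1: "degree ([:1 / f n:] * U a b n) = degree (U a b n)"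
    using fn by (simp add: degree_mult_eq U0)
  have dY: "degree (Y a b (Suc n)) = degree (U a b n)"
    unfolding Y_Suc using assms(2) d1 by (simp add: degree_add_eq_right)
  have Y0: "Y a b (Suc n) \<noteq> 0" using dY assms(2) by auto
  have dg: "degree ([:q (Suc n), - w (Suc n):] * Y a b (Suc n)) = Suc (degree (U a b n))"
    using wn Y0 dY by (subst degree_mult_eq) auto
  have "degree (U a b (Suc n)) = Suc (degree (U a b n))"
    unfolding U_Suc[of a b n] using dg by (subst degree_add_eq_right) auto
  with dY show ?thesis by simp
qed

lemma deg_iter:
  assumes "n0 + k \<le> N" "degree (Y a b n0) < degree (U a b n0)"
  shows "degree (Y a b (n0 + k)) < degree (U a b (n0 + k)) \<and> degree (U a b (n0 + k)) = degree (U a b n0) + k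
     \<and> (k > 0 \<longrightarrow> degree (Y a b (n0 + k)) + 1 = degree (U a b (n0 + k)))"
  using assms
proof (induction k)
  case 0 then show ?case by simp
next
  case (Suc k)
  then have IH: "degree (Y a b (n0 + k)) < degree (U a b (n0 + k))" "degree (U a b (n0 + k)) = degree (U a b n0) + k" by auto
  from deg_step[of "n0 + k" a b] Suc(2) IH show ?case by simp
qed

lemma deg_YU:
  assumes "0 \<le> \<alpha>" "\<alpha> < pi"
  shows "degree (U [:sin \<alpha>:] [:cos \<alpha>:] N) = (if \<alpha> = xi then N - 1 else N) \<and>
         degree (Y [:sin \<alpha>:] [:cos \<alpha>:] N) + 1 = degree (U [:sin \<alpha>:] [:cos \<alpha>:] N)"
proof -
  let ?a = "[:sin \<alpha>:]" and ?b = "[:cos \<alpha>:]"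
  have f0: "f 0 \<noteq> 0" using f_nz by simp
  have f1: "f 1 \<noteq> 0" using f_nz N2 by simp
  have w1: "w 1 \<noteq> 0" "w 2 \<noteq> 0" using w_pos[of 1] w_pos[of 2] N2 by auto
  have Y1: "Y ?a ?b 1 = [:sin \<alpha> + cos \<alpha> / f 0:]" using Y_Suc[of ?a ?b 0] by simp
  show ?thesis
  proof (cases "\<alpha> = xi")
    case False
    then have e: "sin \<alpha> + cos \<alpha> / f 0 \<noteq> 0" using xi_uniq assms by blast
    have dU1: "degree (U ?a ?b 1) = 1"
    proof -
      have "degree ([:q 1, - w 1:] * Y ?a ?b 1) = 1" using e w1 Y1 by (subst degree_mult_eq) auto
      then show ?thesis using U_Suc[of ?a ?b 0] by (simp add: degree_add_eq_right)
    qed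
    have "degree (Y ?a ?b 1) < degree (U ?a ?b 1)" using dU1 Y1 by simp
    from deg_iter[of 1 "N - 1", OF _ this] N2 dU1 show ?thesis using False by simp
  next
    case True
    have X: "sin \<alpha> + cos \<alpha> / f 0 = 0" "cos \<alpha> \<noteq> 0" using xi_props[of f, OF f0] True by auto
    have Y1': "Y ?a ?b 1 = 0" using Y1 X by simp
    have U1: "U ?a ?b 1 = [:cos \<alpha>:]" using U_Suc[of ?a ?b 0] Y1' by simp
    have Y2: "Y ?a ?b 2 = [:cos \<alpha> / f 1:]" using Y_Suc[of ?a ?b 1] Y1' U1 by (simp add: numeral_2_eq_2)
    have dU2: "degree (U ?a ?b 2) = 1"
    proof -
      have "degree ([:q 2, - w 2:] * Y ?a ?b 2) = 1" using X f1 w1 Y2 by (subst degree_mult_eq) auto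
      then show ?thesis using U_Suc[of ?a ?b 1] U1 by (simp add: degree_add_eq_right numeral_2_eq_2)
    qed
    have lt: "degree (Y ?a ?b 2) < degree (U ?a ?b 2)" using dU2 Y2 by simp
    have NN: "2 + (N - 2) = N" using N2 by simp
    from deg_iter[of 2 "N - 2", OF _ lt, unfolded NN] N2 dU2 have
      "degree (Y ?a ?b N) < degree (U ?a ?b N)" "degree (U ?a ?b N) = N - 1"
      "N - 2 > 0 \<longrightarrow> degree (Y ?a ?b N) + 1 = degree (U ?a ?b N)" by auto
    moreover have "N = 2 \<Longrightarrow> degree (Y ?a ?b N) = 0" using Y2 by simp
    ultimately show ?thesis using True N2 by (cases "N = 2") auto
  qed
qed

lemma deg_L:
  assumes "0 \<le> \<alpha>" "\<alpha> < pi" "0 < \<beta>" "\<beta> \<le> pi"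
  shows "degree (L \<alpha> \<beta>) = (if \<alpha> = xi then N - 1 else N) - (if \<beta> = pi then 1 else 0)"
proof -
  let ?y = "Y [:sin \<alpha>:] [:cos \<alpha>:] N" and ?u = "U [:sin \<alpha>:] [:cos \<alpha>:] N"
  note d = deg_YU[OF assms(1,2)]
  show ?thesis
  proof (cases "\<beta> = pi")
    case True
    then have "L \<alpha> \<beta> = - ?y" by (simp add: L_def DD_def)
    then show ?thesis using d True by (cases "\<alpha> = xi") auto
  next
    case False
    then have sb: "sin \<beta> > 0" using assms(3,4) by (intro sin_gt_zero) auto
    have "L \<alpha> \<beta> = smult (cos \<beta>) ?y + smult (- sin \<beta>) ?u" by (simp add: L_def DD_def)
    also have "degree \<dots> = degree (smult (- sin \<beta>) ?u)"
    proof (rule degree_add_eq_right)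
      have "degree (smult (cos \<beta>) ?y) \<le> degree ?y" by (rule degree_smult_le)
      then show "degree (smult (cos \<beta>) ?y) < degree (smult (- sin \<beta>) ?u)" using d sb by simp
    qed
    also have "\<dots> = degree ?u" using sb by simp
    finally show ?thesis using d False by simp
  qed
qed

lemma card_Zr_val:
  assumes "0 \<le> \<alpha>" "\<alpha> < pi" "0 < \<beta>" "\<beta> \<le> pi"
  shows "card (Zr \<alpha> \<beta>) = (if \<alpha> = xi then N - 1 else N) - (if \<beta> = pi then 1 else 0)"
  using card_Zr deg_L[OF assms] by simp

end


lemma sign_after_pos:
  fixes P :: "real poly"
  assumes "poly P x = 0" "poly (pderiv P) x > 0" "x < z" "\<forall>t. x < t \<and> t \<le> z \<longrightarrow> poly P t \<noteq> 0"
  shows "poly P z > 0"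
proof (rule ccontr)
  assume nz: "\<not> ?thesis"
  have "poly P z \<noteq> 0" using assms by auto
  with nz have neg: "poly P z < 0" by simp
  obtain d where d: "d > 0" "\<forall>h>0. h < d \<longrightarrow> poly P x < poly P (x + h)"
    using DERIV_pos_inc_right[OF poly_DERIV[of P x] assms(2)] by blast
  define h where "h = min (d/2) (z - x)"
  have h: "h > 0" "h < d" "h \<le> z - x" using d assms(3) by (auto simp: h_def)
  then have pos: "poly P (x + h) > 0" using d assms(1) by auto
  have "x + h < z"
  proof (rule ccontr)
    assume "\<not> x + h < z" then have "x + h = z" using h by simp
    with pos neg show False by simp
  qed
  from poly_IVT[OF this, of P] pos neg obtain t where "x + h < t" "t < z" "poly P t = 0"
    by (auto simp: mult_pos_neg)
  with h assms(4) show False by auto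
qed

lemma sign_after:
  fixes P :: "real poly"
  assumes "poly P x = 0" "poly (pderiv P) x \<noteq> 0" "x < z" "\<forall>t. x < t \<and> t \<le> z \<longrightarrow> poly P t \<noteq> 0"
  shows "poly P z * poly (pderiv P) x > 0"
proof (cases "poly (pderiv P) x > 0")
  case True
  with sign_after_pos[OF assms(1) True assms(3,4)] show ?thesis by simp
next
  case False
  with assms(2) have n: "poly (pderiv (- P)) x > 0" by (simp add: pderiv_minus)
  have "poly (- P) z > 0" using sign_after_pos[of "- P" x z] assms n by auto
  with False assms(2) show ?thesis by (simp add: mult_neg_neg)
qed

lemma zero_between:
  fixes P Q :: "real poly"
  assumes W: "\<forall>t. s * poly (P * pderiv Q - pderiv P * Q) t > 0"
    and xy: "x < y" "poly P x = 0" "poly P y = 0"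
  shows "\<exists>t. x < t \<and> t < y \<and> poly Q t = 0"
proof (rule ccontr)
  assume nz: "\<not> ?thesis"
  have Qx: "poly Q x \<noteq> 0" using W[rule_format, of x] xy by auto
  have Qy: "poly Q y \<noteq> 0" using W[rule_format, of y] xy by auto
  have Qnz: "poly Q t \<noteq> 0" if "x \<le> t" "t \<le> y" for t
    using that nz Qx Qy by (cases "t = x"; cases "t = y") auto
  define h where "h t = s * (poly P t / poly Q t)" for t
  have "h y < h x"
  proof (rule DERIV_neg_imp_decreasing[OF xy(1)])
    fix t assume t1: "x \<le> t" and t2: "t \<le> y"
    then have t: "x \<le> t \<and> t \<le> y" by simp
    then have q: "poly Q t \<noteq> 0" using Qnz by auto
    have "DERIV h t :> s * ((poly (pderiv P) t * poly Q t - poly P t * poly (pderiv Q) t) / (poly Q t * poly Q t))"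
      unfolding h_def by (intro DERIV_cmult DERIV_divide poly_DERIV q)
    moreover have "s * ((poly (pderiv P) t * poly Q t - poly P t * poly (pderiv Q) t) / (poly Q t * poly Q t)) < 0"
    proof -
      have "s * (poly (pderiv P) t * poly Q t - poly P t * poly (pderiv Q) t) < 0"
        using W[rule_format, of t] by (simp add: algebra_simps)
      moreover have "poly Q t * poly Q t > 0" by (rule linorder_neqE[OF q]) (simp_all add: mult_pos_pos mult_neg_neg)
      ultimately show ?thesis by (simp add: divide_neg_pos)
    qed
    ultimately show "\<exists>y. DERIV h t :> y \<and> y < 0" by blast
  qed
  then show False using xy by (simp add: h_def)
qed

lemma lemma_G:
  fixes P Q :: "real poly"
  assumes W: "\<forall>t. s * poly (P * pderiv Q - pderiv P * Q) t > 0"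
    and xz: "x < z" "poly P x = 0" "poly Q z = 0"
    and nP: "\<forall>t. x < t \<and> t \<le> z \<longrightarrow> poly P t \<noteq> 0"
    and nQ: "\<forall>t. x \<le> t \<and> t < z \<longrightarrow> poly Q t \<noteq> 0"
    and ab: "s * a * b > 0"
  shows "\<exists>t. x < t \<and> t < z \<and> a * poly P t + b * poly Q t = 0"
proof -
  have w: "s * (poly (pderiv P) x * poly Q x) < 0" using W[rule_format, of x] xz by simp
  then have d: "poly (pderiv P) x \<noteq> 0" by auto
  have sa: "poly P z * poly (pderiv P) x > 0" by (rule sign_after[OF xz(2) d xz(1) nP])
  have key: "s * (poly Q x * poly P z) < 0"
  proof -
    have "(s * (poly (pderiv P) x * poly Q x)) * (poly P z * poly (pderiv P) x) < 0"
      using w sa by (simp add: mult_neg_pos)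
    then have "(s * (poly Q x * poly P z)) * (poly (pderiv P) x * poly (pderiv P) x) < 0"
      by (simp add: algebra_simps)
    moreover have "poly (pderiv P) x * poly (pderiv P) x > 0" by (rule linorder_neqE[OF d]) (simp_all add: mult_pos_pos mult_neg_neg)
    ultimately show ?thesis by (simp add: mult_less_0_iff)
  qed
  let ?R = "smult a P + smult b Q"
  have "poly ?R x * poly ?R z < 0"
  proof -
    have "poly ?R x * poly ?R z = a * b * (poly Q x * poly P z)" using xz by (simp add: algebra_simps)
    moreover have "(s * a * b) * (s * (poly Q x * poly P z)) < 0" using ab key by (simp add: mult_pos_neg)
    then have "(s * s) * (a * b * (poly Q x * poly P z)) < 0" by (simp add: algebra_simps)
    then have "a * b * (poly Q x * poly P z) < 0"
      by (simp add: mult_less_0_iff zero_less_mult_iff)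
    ultimately show ?thesis by simp
  qed
  from poly_IVT[OF xz(1) this] show ?thesis by auto
qed


abbreviation sl :: "real set \<Rightarrow> nat \<Rightarrow> real" where "sl A i \<equiv> sorted_list_of_set A ! i"

lemma sl_mem: "finite A \<Longrightarrow> i < card A \<Longrightarrow> sl A i \<in> A"
  by (metis length_sorted_list_of_set nth_mem set_sorted_list_of_set)

lemma sl_less: "finite A \<Longrightarrow> i < j \<Longrightarrow> j < card A \<Longrightarrow> sl A i < sl A j"
  by (metis length_sorted_list_of_set sorted_wrt_nth_less strict_sorted_list_of_set)

lemma sl_le: "finite A \<Longrightarrow> i \<le> j \<Longrightarrow> j < card A \<Longrightarrow> sl A i \<le> sl A j"
  by (metis order.order_iff_strict sl_less)

lemma sl_ex: "finite A \<Longrightarrow> x \<in> A \<Longrightarrow> \<exists>i<card A. sl A i = x"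
  by (metis in_set_conv_nth length_sorted_list_of_set set_sorted_list_of_set)

lemma card_below: assumes "finite A" "k < card A" shows "card {x\<in>A. x < sl A k} = k"
proof -
  have "{x\<in>A. x < sl A k} = (\<lambda>i. sl A i) ` {..<k}"
  proof (intro equalityI subsetI)
    fix x assume "x \<in> {x\<in>A. x < sl A k}"
    then obtain i where i: "i < card A" "sl A i = x" "x < sl A k" using sl_ex[OF assms(1)] by blast
    have "i < k"
    proof (rule ccontr)
      assume "\<not> i < k" then have "sl A k \<le> sl A i" using sl_le[OF assms(1), of k i] i by simp
      with i show False by simp
    qed
    with i show "x \<in> (\<lambda>i. sl A i) ` {..<k}" by blast
  next
    fix x assume "x \<in> (\<lambda>i. sl A i) ` {..<k}"
    then obtain i where "i < k" "x = sl A i" by blast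
    then show "x \<in> {x\<in>A. x < sl A k}" using sl_mem sl_less assms by auto
  qed
  moreover have "inj_on (\<lambda>i. sl A i) {..<k}"
  proof (rule inj_onI)
    fix i j assume ij: "i \<in> {..<k}" "j \<in> {..<k}" "sl A i = sl A j"
    have jc: "i < card A" "j < card A" using ij(1,2) assms(2) by auto
    show "i = j"
    proof (rule ccontr)
      assume "i \<noteq> j"
      then consider "i < j" | "j < i" by linarith
      then show False
      proof cases
        case 1 then have "sl A i < sl A j" using sl_less[OF assms(1), of i j] jc by simp
        with ij show False by simp
      next
        case 2 then have "sl A j < sl A i" using sl_less[OF assms(1), of j i] jc by simp
        with ij show False by simp
      qed
    qed
  qed
  ultimately show ?thesis by (simp add: card_image)
qed

lemma K: assumes "finite A" "k < card A" "k + 1 \<le> card {x\<in>A. x < t}" shows "sl A k < t"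
proof (rule ccontr)
  assume "\<not> ?thesis"
  then have "{x\<in>A. x < t} \<subseteq> {x\<in>A. x < sl A k}" by auto
  then have "card {x\<in>A. x < t} \<le> card {x\<in>A. x < sl A k}" using assms(1) by (intro card_mono) auto
  with card_below[OF assms(1,2)] assms(3) show False by simp
qed

definition betw :: "real set \<Rightarrow> real set \<Rightarrow> bool" where
  "betw A B \<longleftrightarrow> (\<forall>x\<in>A. \<forall>y\<in>A. x < y \<longrightarrow> (\<exists>z\<in>B. x < z \<and> z < y))"

definition interl :: "real set \<Rightarrow> real set \<Rightarrow> bool" where
  "interl A B \<longleftrightarrow> finite A \<and> finite B \<and> A \<inter> B = {} \<and> betw A B \<and> betw B A"

lemma interl_sym: "interl A B \<Longrightarrow> interl B A"
  unfolding interl_def by auto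

lemma M1: assumes "finite A" "finite B" "betw A B" "i < card A"
  shows "i \<le> card {y\<in>B. sl A 0 < y \<and> y < sl A i}"
proof -
  have "\<forall>j\<in>{..<i}. \<exists>z. z \<in> B \<and> sl A j < z \<and> z < sl A (Suc j)"
  proof
    fix j assume "j \<in> {..<i}"
    then have j: "Suc j < card A" using assms by auto
    have m: "sl A j \<in> A" "sl A (Suc j) \<in> A" using sl_mem[OF assms(1)] j by auto
    have "sl A j < sl A (Suc j)" using sl_less[OF assms(1)] j by simp
    with m assms(3) show "\<exists>z. z \<in> B \<and> sl A j < z \<and> z < sl A (Suc j)"
      unfolding betw_def by blast
  qed
  from bchoice[OF this] obtain zf where zf: "\<forall>j\<in>{..<i}. zf j \<in> B \<and> sl A j < zf j \<and> zf j < sl A (Suc j)"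
    by blast
  have inj: "inj_on zf {..<i}"
  proof (rule inj_onI)
    fix j j' assume j: "j \<in> {..<i}" "j' \<in> {..<i}" "zf j = zf j'"
    show "j = j'"
    proof (rule ccontr)
      assume "j \<noteq> j'"
      then consider "j < j'" | "j' < j" by linarith
      then show False
      proof cases
        case 1
        then have "sl A (Suc j) \<le> sl A j'" using sl_le[OF assms(1)] j assms(4) by simp
        moreover have "zf j < sl A (Suc j)" "sl A j' < zf j'" using zf j(1,2) by auto
        ultimately show False using j(3) by simp
      next
        case 2
        then have "sl A (Suc j') \<le> sl A j" using sl_le[OF assms(1)] j assms(4) by simp
        moreover have "zf j' < sl A (Suc j')" "sl A j < zf j" using zf j(1,2) by auto
        ultimately show False using j(3) by simp
      qed
    qed
  qed
  have sub: "zf ` {..<i} \<subseteq> {y\<in>B. sl A 0 < y \<and> y < sl A i}"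
  proof
    fix y assume "y \<in> zf ` {..<i}"
    then obtain j where j: "j < i" "y = zf j" by blast
    have "sl A 0 \<le> sl A j" "sl A (Suc j) \<le> sl A i" using sl_le[OF assms(1)] j assms(4) by auto
    moreover have "zf j \<in> B" "sl A j < zf j" "zf j < sl A (Suc j)" using zf j by auto
    ultimately show "y \<in> {y\<in>B. sl A 0 < y \<and> y < sl A i}" using j by simp
  qed
  have "i = card (zf ` {..<i})" using inj by (simp add: card_image)
  also have "\<dots> \<le> card {y\<in>B. sl A 0 < y \<and> y < sl A i}" using sub assms(2) by (intro card_mono) auto
  finally show ?thesis .
qed

lemma CLcore:
  assumes I: "interl A B" and first: "sl A 0 < sl B 0" and nB: "card B \<ge> 1"
  shows "(\<forall>i. i < card A \<and> i < card B \<longrightarrow> sl A i < sl B i) \<and>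
         (\<forall>i. i < card B \<and> i + 1 < card A \<longrightarrow> sl B i < sl A (i+1))"
proof -
  from I have fA: "finite A" and fB: "finite B" and bAB: "betw A B" and bBA: "betw B A" and dj: "A \<inter> B = {}"
    by (auto simp: interl_def)
  have 1: "sl A i < sl B i" if i: "i < card A" "i < card B" for i
  proof -
    let ?S = "{y\<in>A. sl B 0 < y \<and> y < sl B i}" and ?T = "{x\<in>A. x < sl B i}"
    have c0: "i \<le> card ?S" by (rule M1[OF fB fA bBA i(2)])
    have sub: "insert (sl A 0) ?S \<subseteq> ?T"
      using first sl_mem[OF fA] sl_le[OF fB, of 0 i] i by auto
    have ni: "sl A 0 \<notin> ?S" using first by auto
    have fS: "finite ?S" and fT: "finite ?T" using fA by auto
    have c1: "card (insert (sl A 0) ?S) = Suc (card ?S)" using fS ni by simp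
    have c2: "card (insert (sl A 0) ?S) \<le> card ?T" using card_mono[OF fT sub] .
    have "i + 1 \<le> card ?T" using c0 c1 c2 by linarith
    then show ?thesis by (rule K[OF fA i(1)])
  qed
  have 2: "sl B i < sl A (i+1)" if i: "i < card B" "i + 1 < card A" for i
  proof -
    have "i + 1 \<le> card {y\<in>B. sl A 0 < y \<and> y < sl A (i+1)}" by (rule M1[OF fA fB bAB i(2)])
    also have "\<dots> \<le> card {y\<in>B. y < sl A (i+1)}" using fB by (intro card_mono) auto
    finally show ?thesis by (rule K[OF fB i(1)])
  qed
  from 1 2 show ?thesis by blast
qed

lemma first_lt:
  assumes I: "interl A B" and c: "card A = card B + 1" and nB: "card B \<ge> 1"
  shows "sl A 0 < sl B 0"
proof (rule ccontr)
  from I have fA: "finite A" and fB: "finite B" and bAB: "betw A B" and dj: "A \<inter> B = {}"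
    by (auto simp: interl_def)
  assume "\<not> ?thesis"
  moreover have "sl A 0 \<noteq> sl B 0" using sl_mem[OF fA, of 0] sl_mem[OF fB, of 0] dj c nB by auto
  ultimately have lt: "sl B 0 < sl A 0" by simp
  let ?m = "card A - 1"
  let ?S = "{y\<in>B. sl A 0 < y \<and> y < sl A ?m}"
  have c0: "?m \<le> card ?S" by (rule M1[OF fA fB bAB]) (use c in simp)
  have sub: "insert (sl B 0) ?S \<subseteq> B" using sl_mem[OF fB, of 0] nB by auto
  have ni: "sl B 0 \<notin> ?S" using lt by auto
  have fS: "finite ?S" using fB by auto
  have c1: "card (insert (sl B 0) ?S) = Suc (card ?S)" using fS ni by simp
  have c2: "card (insert (sl B 0) ?S) \<le> card B" using card_mono[OF fB sub] .
  have "?m + 1 \<le> card B" using c0 c1 c2 by linarith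
  with c show False by simp
qed

lemma CL1:
  assumes I: "interl A B" and c: "card A = card B + 1"
  shows "\<forall>i<card B. sl A i < sl B i \<and> sl B i < sl A (i+1)"
proof (cases "card B \<ge> 1")
  case True
  from CLcore[OF I first_lt[OF I c True] True] c show ?thesis by auto
qed auto

lemma CL2:
  assumes I: "interl A B" and c: "card A = card B" and nB: "card B \<ge> 1" and first: "sl A 0 < sl B 0"
  shows "(\<forall>i<card A. sl A i < sl B i) \<and> (\<forall>i. i + 1 < card A \<longrightarrow> sl B i < sl A (i+1))"
  using CLcore[OF I first nB] c by auto

lemma first_all:
  assumes I: "interl A B" and c: "card A = card B + 1" and x: "x \<in> B"
  shows "sl A 0 < x"
proof -
  from I have fA: "finite A" and fB: "finite B" by (auto simp: interl_def)
  have "card B \<noteq> 0" using x fB by auto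
  then have nB: "card B \<ge> 1" by simp
  obtain i where "i < card B" "sl B i = x" using sl_ex[OF fB x] by blast
  then have "sl B 0 \<le> x" using sl_le[OF fB, of 0 i] by simp
  with first_lt[OF I c nB] show ?thesis by simp
qed


lemma interl_of:
  fixes P Q :: "real poly"
  assumes P0: "P \<noteq> 0" and Q0: "Q \<noteq> 0"
    and W1: "\<forall>t. s * poly (P * pderiv Q - pderiv P * Q) t > 0"
    and W2: "\<forall>t. s' * poly (Q * pderiv P - pderiv Q * P) t > 0"
  shows "interl {x. poly P x = 0} {x. poly Q x = 0}"
  unfolding interl_def betw_def
proof (intro conjI ballI impI)
  show "finite {x. poly P x = 0}" "finite {x. poly Q x = 0}" using P0 Q0 poly_roots_finite by blast+
  show "{x. poly P x = 0} \<inter> {x. poly Q x = 0} = {}"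
  proof (rule ccontr)
    assume "\<not> ?thesis" then obtain x where "poly P x = 0" "poly Q x = 0" by auto
    with W1[rule_format, of x] show False by simp
  qed
next
  fix x y assume "x \<in> {x. poly P x = 0}" "y \<in> {x. poly P x = 0}" "x < y"
  with zero_between[OF W1, of x y] show "\<exists>z\<in>{x. poly Q x = 0}. x < z \<and> z < y" by auto
next
  fix x y assume "x \<in> {x. poly Q x = 0}" "y \<in> {x. poly Q x = 0}" "x < y"
  with zero_between[OF W2, of x y] show "\<exists>z\<in>{x. poly P x = 0}. x < z \<and> z < y" by auto
qed

lemma sl_min: "finite A \<Longrightarrow> x \<in> A \<Longrightarrow> sl A 0 \<le> x"
  by (metis sl_ex sl_le le0)

lemma order3:
  fixes P Q R :: "real poly"
  assumes I: "interl {x. poly P x = 0} {x. poly Q x = 0}"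
    and W: "\<forall>t. s * poly (P * pderiv Q - pderiv P * Q) t > 0"
    and R: "R = smult a P + smult b Q" and ab: "s * a * b > 0"
    and cP: "card {x. poly P x = 0} \<ge> 1" and cQ: "card {x. poly Q x = 0} \<ge> 1"
    and Rr: "\<forall>t. poly R t = 0 \<longrightarrow> sl {x. poly Q x = 0} 0 < t"
  shows "sl {x. poly Q x = 0} 0 < sl {x. poly P x = 0} 0"
proof (rule ccontr)
  let ?A = "{x. poly Q x = 0}" and ?B = "{x. poly P x = 0}"
  from I have fA: "finite ?A" and fB: "finite ?B" and dj: "?B \<inter> ?A = {}" by (auto simp: interl_def)
  define z where "z = sl ?A 0"
  have zA: "z \<in> ?A" unfolding z_def using sl_mem[OF fA] cQ by simp
  have b0B: "sl ?B 0 \<in> ?B" using sl_mem[OF fB] cP by simp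
  assume "\<not> sl ?A 0 < sl ?B 0"
  moreover have "sl ?A 0 \<noteq> sl ?B 0" using zA b0B dj z_def by auto
  ultimately have lt: "sl ?B 0 < z" unfolding z_def by simp
  define S where "S = {y\<in>?B. y < z}"
  have Sne: "S \<noteq> {}" "finite S" using lt b0B fB by (auto simp: S_def)
  define x where "x = Max S"
  have xS: "x \<in> S" unfolding x_def using Sne by simp
  then have xz: "x < z" "poly P x = 0" by (auto simp: S_def)
  have nP: "\<forall>t. x < t \<and> t \<le> z \<longrightarrow> poly P t \<noteq> 0"
  proof (intro allI impI)
    fix t assume t: "x < t \<and> t \<le> z"
    show "poly P t \<noteq> 0"
    proof
      assume pt: "poly P t = 0"
      have "t \<noteq> z" using pt zA dj by auto
      with t pt have "t \<in> S" by (auto simp: S_def)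
      then have "t \<le> x" unfolding x_def using Sne by simp
      with t show False by simp
    qed
  qed
  have nQ: "\<forall>t. x \<le> t \<and> t < z \<longrightarrow> poly Q t \<noteq> 0"
  proof (intro allI impI notI)
    fix t assume "x \<le> t \<and> t < z" "poly Q t = 0"
    then have "z \<le> t" using sl_min[OF fA, of t] z_def by simp
    with \<open>x \<le> t \<and> t < z\<close> show False by simp
  qed
  from lemma_G[OF W xz(1) xz(2) _ nP nQ ab] zA obtain t where t: "x < t" "t < z" "a * poly P t + b * poly Q t = 0"
    by auto
  then have "poly R t = 0" using R by simp
  with Rr t z_def show False by auto
qed

context slp begin

lemma Zr_def': "Zr \<alpha> \<beta> = {x. poly (L \<alpha> \<beta>) x = 0}" by (simp add: Zr_def)

lemma IB:
  assumes "0 < \<beta>0" "\<beta>0 < pi"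
  shows "interl (Zr \<alpha> \<beta>0) (Zr \<alpha> pi)"
  unfolding Zr_def
proof (rule interl_of[OF L_nz L_nz])
  have s: "sin (pi - \<beta>0) > 0" using assms by (intro sin_gt_zero) auto
  show "\<forall>t. sin (pi - \<beta>0) * poly (L \<alpha> \<beta>0 * pderiv (L \<alpha> pi) - pderiv (L \<alpha> \<beta>0) * L \<alpha> pi) t > 0"
    unfolding WB using s Sig_phi_pos by simp
  have s': "sin (\<beta>0 - pi) < 0" using s by (simp add: sin_diff)
  show "\<forall>t. (-1) * poly (L \<alpha> pi * pderiv (L \<alpha> \<beta>0) - pderiv (L \<alpha> pi) * L \<alpha> \<beta>0) t > 0"
    unfolding WB using s' Sig_phi_pos by (simp add: mult_neg_pos)
qed

lemma IA_aux:
  assumes "sin (\<alpha> - \<alpha>') \<noteq> 0"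
  shows "\<forall>t. sin (\<alpha> - \<alpha>') * poly (L \<alpha> \<beta> * pderiv (L \<alpha>' \<beta>) - pderiv (L \<alpha> \<beta>) * L \<alpha>' \<beta>) t > 0"
proof
  fix t
  have sq: "sin (\<alpha> - \<alpha>') * sin (\<alpha> - \<alpha>') > 0"
    by (rule linorder_neqE[OF assms]) (simp_all add: mult_pos_pos mult_neg_neg)
  have "poly (L \<alpha> \<beta> * pderiv (L \<alpha>' \<beta>) - pderiv (L \<alpha> \<beta>) * L \<alpha>' \<beta>) t
      = sin (\<alpha> - \<alpha>') * poly (Sig (DS \<beta>) (- DC \<beta>) N) t" unfolding WA by simp
  then show "sin (\<alpha> - \<alpha>') * poly (L \<alpha> \<beta> * pderiv (L \<alpha>' \<beta>) - pderiv (L \<alpha> \<beta>) * L \<alpha>' \<beta>) t > 0"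
    using mult_pos_pos[OF sq Sig_psi_pos[of \<beta> t]] by (simp add: mult.assoc)
qed

lemma IA:
  assumes "sin (\<alpha> - \<alpha>') \<noteq> 0"
  shows "interl (Zr \<alpha> \<beta>) (Zr \<alpha>' \<beta>)"
  unfolding Zr_def
proof (rule interl_of[OF L_nz L_nz])
  show "\<forall>t. sin (\<alpha> - \<alpha>') * poly (L \<alpha> \<beta> * pderiv (L \<alpha>' \<beta>) - pderiv (L \<alpha> \<beta>) * L \<alpha>' \<beta>) t > 0"
    by (rule IA_aux[OF assms])
  have "sin (\<alpha>' - \<alpha>) \<noteq> 0" using assms by (metis minus_diff_eq sin_minus neg_equal_0_iff_equal)
  then show "\<forall>t. sin (\<alpha>' - \<alpha>) * poly (L \<alpha>' \<beta> * pderiv (L \<alpha> \<beta>) - pderiv (L \<alpha>' \<beta>) * L \<alpha> \<beta>) t > 0"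
    by (rule IA_aux)
qed

lemma L_xi_comb:
  assumes "sin \<alpha>0 \<noteq> 0"
  shows "L \<xi> \<beta> = smult (sin (\<alpha>0 - \<xi>) / sin \<alpha>0) (L 0 \<beta>) + smult (sin \<xi> / sin \<alpha>0) (L \<alpha>0 \<beta>)"
proof -
  have "L \<xi> \<beta> = smult (sin \<xi>) (DC \<beta>) + smult (cos \<xi>) (DS \<beta>)" by (rule L_lin)
  moreover have "smult (sin (\<alpha>0 - \<xi>) / sin \<alpha>0) (L 0 \<beta>) + smult (sin \<xi> / sin \<alpha>0) (L \<alpha>0 \<beta>)
     = smult (sin \<xi>) (DC \<beta>) + smult ((sin (\<alpha>0 - \<xi>) + sin \<xi> * cos \<alpha>0) / sin \<alpha>0) (DS \<beta>)"
    unfolding L_lin using assms by (simp add: smult_add_right add_divide_distrib algebra_simps smult_add_left)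
  moreover have "(sin (\<alpha>0 - \<xi>) + sin \<xi> * cos \<alpha>0) / sin \<alpha>0 = cos \<xi>"
    using assms by (simp add: sin_diff field_simps)
  ultimately show ?thesis by simp
qed

end

context slp begin

abbreviation lm where "lm \<alpha> \<beta> n \<equiv> sl (Zr \<alpha> \<beta>) n"

lemma xi_bounds: "0 < xi" "xi < pi"
  using xi_props[of f] f_nz[of 0] by auto

lemma cardZ:
  assumes "0 \<le> \<alpha>" "\<alpha> < pi" "0 < \<beta>" "\<beta> \<le> pi"
  shows "card (Zr \<alpha> \<beta>) = (if \<alpha> = xi then N - 1 else N) - (if \<beta> = pi then 1 else 0)"
  by (rule card_Zr_val[OF assms])

lemma finZ: "finite (Zr \<alpha> \<beta>)" by (rule Zr_finite)

lemma sin_ne: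
  assumes "0 \<le> \<alpha>" "\<alpha> < pi" "0 \<le> \<alpha>'" "\<alpha>' < pi" "\<alpha> \<noteq> \<alpha>'"
  shows "sin (\<alpha> - \<alpha>') \<noteq> 0"
proof
  assume "sin (\<alpha> - \<alpha>') = 0"
  moreover have "- pi < \<alpha> - \<alpha>'" "\<alpha> - \<alpha>' < pi" using assms by linarith+
  ultimately have "\<alpha> - \<alpha>' = 0" using sin_eq_0_pi by blast
  with assms show False by simp
qed

lemma CB:
  assumes "0 \<le> \<alpha>" "\<alpha> < pi" "0 < \<beta>0" "\<beta>0 < pi" "i < card (Zr \<alpha> pi)"
  shows "lm \<alpha> \<beta>0 i < lm \<alpha> pi i \<and> lm \<alpha> pi i < lm \<alpha> \<beta>0 (i+1)"
proof -
  have c: "card (Zr \<alpha> \<beta>0) = card (Zr \<alpha> pi) + 1"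
    using cardZ[of \<alpha> \<beta>0] cardZ[of \<alpha> pi] assms N2 by auto
  from CL1[OF IB[OF assms(3,4)] c] assms(5) show ?thesis by blast
qed

lemma CX:
  assumes "0 < \<beta>" "\<beta> \<le> pi" "i < card (Zr xi \<beta>)"
  shows "lm 0 \<beta> i < lm xi \<beta> i \<and> lm xi \<beta> i < lm 0 \<beta> (i+1)"
proof -
  note xb = xi_bounds
  have c: "card (Zr 0 \<beta>) = card (Zr xi \<beta>) + 1"
    using cardZ[of 0 \<beta>] cardZ[of xi \<beta>] assms xb N2 by auto
  have I: "interl (Zr 0 \<beta>) (Zr xi \<beta>)" by (rule IA, rule sin_ne) (use xb in auto)
  from CL1[OF I c] assms(3) show ?thesis by blast
qed

lemma first_xi:
  assumes "0 \<le> \<alpha>" "\<alpha> < pi" "\<alpha> \<noteq> xi" "0 < \<beta>" "\<beta> \<le> pi"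
  shows "\<forall>t. poly (L xi \<beta>) t = 0 \<longrightarrow> lm \<alpha> \<beta> 0 < t"
proof (intro allI impI)
  fix t assume t: "poly (L xi \<beta>) t = 0"
  note xb = xi_bounds
  have c: "card (Zr \<alpha> \<beta>) = card (Zr xi \<beta>) + 1"
    using cardZ[of \<alpha> \<beta>] cardZ[of xi \<beta>] assms xb N2 by auto
  have I: "interl (Zr \<alpha> \<beta>) (Zr xi \<beta>)" by (rule IA, rule sin_ne) (use xb assms in auto)
  show "lm \<alpha> \<beta> 0 < t" by (rule first_all[OF I c]) (use t in \<open>simp add: Zr_def\<close>)
qed

lemma ordA:
  assumes a: "0 < \<alpha>0" "\<alpha>0 < xi" and b: "0 < \<beta>" "\<beta> \<le> pi"
  shows "lm \<alpha>0 \<beta> 0 < lm 0 \<beta> 0"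
proof -
  note xb = xi_bounds
  have s0: "sin \<alpha>0 > 0" using a xb by (intro sin_gt_zero) auto
  have s1: "sin (\<alpha>0 - xi) < 0"
  proof -
    have "sin (xi - \<alpha>0) > 0" using a xb by (intro sin_gt_zero) auto
    then show ?thesis by (metis minus_diff_eq sin_minus neg_less_0_iff_less)
  qed
  have s2: "sin xi > 0" using xb by (intro sin_gt_zero) auto
  have I: "interl {x. poly (L 0 \<beta>) x = 0} {x. poly (L \<alpha>0 \<beta>) x = 0}"
    using IA[of 0 \<alpha>0 \<beta>] sin_ne[of 0 \<alpha>0] a xb by (simp add: Zr_def)
  have W: "\<forall>t. (-1) * poly (L 0 \<beta> * pderiv (L \<alpha>0 \<beta>) - pderiv (L 0 \<beta>) * L \<alpha>0 \<beta>) t > 0"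
    unfolding WA using s0 Sig_psi_pos by simp
  have R: "L xi \<beta> = smult (sin (\<alpha>0 - xi) / sin \<alpha>0) (L 0 \<beta>) + smult (sin xi / sin \<alpha>0) (L \<alpha>0 \<beta>)"
    by (rule L_xi_comb) (use s0 in simp)
  have ab: "(-1) * (sin (\<alpha>0 - xi) / sin \<alpha>0) * (sin xi / sin \<alpha>0) > 0"
    using s0 s1 s2 by (simp add: divide_neg_pos mult_neg_pos)
  have cP: "card {x. poly (L 0 \<beta>) x = 0} \<ge> 1" using cardZ[of 0 \<beta>] b xb N2 unfolding Zr_def by auto
  have cQ: "card {x. poly (L \<alpha>0 \<beta>) x = 0} \<ge> 1" using cardZ[of \<alpha>0 \<beta>] a b xb N2 unfolding Zr_def by auto
  have Rr: "\<forall>t. poly (L xi \<beta>) t = 0 \<longrightarrow> sl {x. poly (L \<alpha>0 \<beta>) x = 0} 0 < t"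
    using first_xi[of \<alpha>0 \<beta>] a b xb unfolding Zr_def by auto
  from order3[OF I W R ab cP cQ Rr] show ?thesis by (simp add: Zr_def)
qed

lemma ordB:
  assumes a: "xi < \<alpha>0" "\<alpha>0 < pi" and b: "0 < \<beta>" "\<beta> \<le> pi"
  shows "lm 0 \<beta> 0 < lm \<alpha>0 \<beta> 0"
proof -
  note xb = xi_bounds
  have s0: "sin \<alpha>0 > 0" using a xb by (intro sin_gt_zero) auto
  have s1: "sin (\<alpha>0 - xi) > 0" using a xb by (intro sin_gt_zero) auto
  have s2: "sin xi > 0" using xb by (intro sin_gt_zero) auto
  have I: "interl {x. poly (L \<alpha>0 \<beta>) x = 0} {x. poly (L 0 \<beta>) x = 0}"
    using IA[of \<alpha>0 0 \<beta>] sin_ne[of \<alpha>0 0] a xb by (simp add: Zr_def)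
  have W: "\<forall>t. 1 * poly (L \<alpha>0 \<beta> * pderiv (L 0 \<beta>) - pderiv (L \<alpha>0 \<beta>) * L 0 \<beta>) t > 0"
    unfolding WA using s0 Sig_psi_pos by simp
  have R: "L xi \<beta> = smult (sin xi / sin \<alpha>0) (L \<alpha>0 \<beta>) + smult (sin (\<alpha>0 - xi) / sin \<alpha>0) (L 0 \<beta>)"
    using L_xi_comb[of \<alpha>0 xi \<beta>] s0 by (simp add: add.commute)
  have ab: "1 * (sin xi / sin \<alpha>0) * (sin (\<alpha>0 - xi) / sin \<alpha>0) > 0"
    using s0 s1 s2 by simp
  have cP: "card {x. poly (L \<alpha>0 \<beta>) x = 0} \<ge> 1" using cardZ[of \<alpha>0 \<beta>] a b xb N2 unfolding Zr_def by auto
  have cQ: "card {x. poly (L 0 \<beta>) x = 0} \<ge> 1" using cardZ[of 0 \<beta>] b xb N2 unfolding Zr_def by auto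
  have Rr: "\<forall>t. poly (L xi \<beta>) t = 0 \<longrightarrow> sl {x. poly (L 0 \<beta>) x = 0} 0 < t"
    using first_xi[of 0 \<beta>] b xb unfolding Zr_def by auto
  from order3[OF I W R ab cP cQ Rr] show ?thesis by (simp add: Zr_def)
qed

lemma CA:
  assumes a: "0 < \<alpha>0" "\<alpha>0 < xi" and b: "0 < \<beta>" "\<beta> \<le> pi"
  shows "(\<forall>i<card (Zr 0 \<beta>). lm \<alpha>0 \<beta> i < lm 0 \<beta> i) \<and> (\<forall>i. i + 1 < card (Zr 0 \<beta>) \<longrightarrow> lm 0 \<beta> i < lm \<alpha>0 \<beta> (i+1))"
proof -
  note xb = xi_bounds
  have c: "card (Zr \<alpha>0 \<beta>) = card (Zr 0 \<beta>)" using cardZ[of 0 \<beta>] cardZ[of \<alpha>0 \<beta>] a b xb by auto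
  have n: "card (Zr 0 \<beta>) \<ge> 1" using cardZ[of 0 \<beta>] b xb N2 by auto
  have I: "interl (Zr \<alpha>0 \<beta>) (Zr 0 \<beta>)" by (rule IA, rule sin_ne) (use a xb in auto)
  from CL2[OF I c n ordA[OF a b]] c show ?thesis by simp
qed

lemma CA':
  assumes a: "xi < \<alpha>0" "\<alpha>0 < pi" and b: "0 < \<beta>" "\<beta> \<le> pi"
  shows "(\<forall>i<card (Zr 0 \<beta>). lm 0 \<beta> i < lm \<alpha>0 \<beta> i) \<and> (\<forall>i. i + 1 < card (Zr 0 \<beta>) \<longrightarrow> lm \<alpha>0 \<beta> i < lm 0 \<beta> (i+1))"
proof -
  note xb = xi_bounds
  have c: "card (Zr 0 \<beta>) = card (Zr \<alpha>0 \<beta>)" using cardZ[of 0 \<beta>] cardZ[of \<alpha>0 \<beta>] a b xb by auto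
  have n: "card (Zr \<alpha>0 \<beta>) \<ge> 1" using cardZ[of \<alpha>0 \<beta>] a b xb N2 by auto
  have I: "interl (Zr 0 \<beta>) (Zr \<alpha>0 \<beta>)" by (rule IA, rule sin_ne) (use a xb in auto)
  from CL2[OF I c n ordB[OF a b]] c show ?thesis by simp
qed

end


theorem corollary3p1:
  fixes N :: nat and f q w :: "nat \<Rightarrow> real"
  assumes N2: "N \<ge> 2"
    and f_nz: "\<And>n. n \<le> N \<Longrightarrow> f n \<noteq> 0"
    and w_pos: "\<And>n. 1 \<le> n \<Longrightarrow> n \<le> N \<Longrightarrow> w n > 0"
  defines "\<xi> \<equiv> sl_xi f"
    and "lam \<equiv> sl_eig N f q w"
  shows
  \<comment> \<open>(i)\<close>
  "(\<forall>\<alpha>0 \<beta>0. 0 < \<alpha>0 \<and> \<alpha>0 < \<xi> \<and> 0 < \<beta>0 \<and> \<beta>0 < pi \<longrightarrow>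
      (\<forall>n. n + 2 \<le> N \<longrightarrow>
          lam \<alpha>0 \<beta>0 n < lam 0 \<beta>0 n \<and> lam \<alpha>0 \<beta>0 n < lam \<alpha>0 pi n \<and>
          lam 0 \<beta>0 n < lam \<alpha>0 \<beta>0 (n+1) \<and> lam \<alpha>0 pi n < lam \<alpha>0 \<beta>0 (n+1)) \<and>
      lam \<alpha>0 \<beta>0 (N-1) < lam 0 \<beta>0 (N-1))
   \<and>
  \<comment> \<open>(ii)\<close>
   (\<forall>\<alpha>0 \<beta>0. \<xi> < \<alpha>0 \<and> \<alpha>0 < pi \<and> 0 < \<beta>0 \<and> \<beta>0 < pi \<longrightarrow>
      lam 0 \<beta>0 0 < lam \<alpha>0 \<beta>0 0 \<and>
      (\<forall>n. n + 2 \<le> N \<longrightarrow>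
          lam \<alpha>0 \<beta>0 n < lam 0 \<beta>0 (n+1) \<and> lam \<alpha>0 \<beta>0 n < lam \<alpha>0 pi n \<and>
          lam 0 \<beta>0 (n+1) < lam \<alpha>0 \<beta>0 (n+1) \<and> lam \<alpha>0 pi n < lam \<alpha>0 \<beta>0 (n+1)))
   \<and>
  \<comment> \<open>(iii)\<close>
   (\<forall>\<beta>0. 0 < \<beta>0 \<and> \<beta>0 < pi \<longrightarrow>
      lam 0 \<beta>0 0 < lam \<xi> \<beta>0 0 \<and>
      (\<forall>n. n + 3 \<le> N \<longrightarrow>
          lam \<xi> \<beta>0 n < lam 0 \<beta>0 (n+1) \<and> lam \<xi> \<beta>0 n < lam \<xi> pi n \<and>
          lam 0 \<beta>0 (n+1) < lam \<xi> \<beta>0 (n+1) \<and> lam \<xi> pi n < lam \<xi> \<beta>0 (n+1)) \<and>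
      lam \<xi> \<beta>0 (N-2) < lam 0 \<beta>0 (N-1))
   \<and>
  \<comment> \<open>(iv)\<close>
   (\<forall>\<alpha>0. 0 < \<alpha>0 \<and> \<alpha>0 < \<xi> \<longrightarrow>
      (\<forall>n. n + 2 \<le> N \<longrightarrow>
          lam \<alpha>0 pi n < lam 0 pi n \<and>
          (n + 3 \<le> N \<longrightarrow> lam 0 pi n < lam \<alpha>0 pi (n+1))))
   \<and>
  \<comment> \<open>(v)\<close>
   (\<forall>\<alpha>0. \<xi> < \<alpha>0 \<and> \<alpha>0 < pi \<longrightarrow>
      (\<forall>n. n + 2 \<le> N \<longrightarrow>
          lam 0 pi n < lam \<alpha>0 pi n \<and>
          (n + 3 \<le> N \<longrightarrow> lam \<alpha>0 pi n < lam 0 pi (n+1))))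
   \<and>
  \<comment> \<open>(vi)\<close>
   (\<forall>n. n + 3 \<le> N \<longrightarrow> lam 0 pi n < lam \<xi> pi n \<and> lam \<xi> pi n < lam 0 pi (n+1))
   \<and>
  \<comment> \<open>(vii)\<close>
   (\<forall>\<beta>0. 0 < \<beta>0 \<and> \<beta>0 < pi \<longrightarrow>
      (\<forall>n. n + 2 \<le> N \<longrightarrow> lam 0 \<beta>0 n < lam 0 pi n \<and> lam 0 pi n < lam 0 \<beta>0 (n+1)))"
proof -
  interpret slp N f q w by unfold_locales (use N2 f_nz w_pos in auto)
  have lam: "lam a b k = lm a b k" for a b k unfolding assms(5) by (rule eig_eq)
  have xi_eq: "\<xi> = xi" unfolding assms(4) ..
  note xb = xi_bounds
  have c0b: "card (Zr 0 b) = N" if "0 < b" "b < pi" for b using cardZ[of 0 b] that xb by auto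
  have c0p: "card (Zr 0 pi) = N - 1" using cardZ[of 0 pi] xb by auto
  have cxb: "card (Zr xi b) = N - 1" if "0 < b" "b < pi" for b using cardZ[of xi b] that xb by auto
  have cxp: "card (Zr xi pi) = N - 2" using cardZ[of xi pi] xb by auto
  have cap: "card (Zr a pi) = N - 1" if "0 \<le> a" "a < pi" "a \<noteq> xi" for a using cardZ[of a pi] that by auto
  show ?thesis
    unfolding lam xi_eq
  proof (intro conjI allI impI)
    fix \<alpha>0 \<beta>0 assume h: "0 < \<alpha>0 \<and> \<alpha>0 < xi \<and> 0 < \<beta>0 \<and> \<beta>0 < pi"
    then have h1: "0 < \<alpha>0" "\<alpha>0 < xi" "0 < \<beta>0" "\<beta>0 < pi" by auto
    have a_pi: "\<alpha>0 < pi" using h1 xb by simp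
    note A = CA[OF h1(1,2) h1(3) less_imp_le[OF h1(4)]]
    note cb = c0b[OF h1(3,4)]
    {
      fix n assume n: "n + 2 \<le> N"
      have i1: "n < card (Zr \<alpha>0 pi)" using cap[of \<alpha>0] h1 a_pi n by auto
      show "lm \<alpha>0 \<beta>0 n < lm 0 \<beta>0 n" using A cb n by auto
      show "lm \<alpha>0 \<beta>0 n < lm \<alpha>0 pi n" using CB[OF _ a_pi h1(3,4) i1] h1 by simp
      show "lm 0 \<beta>0 n < lm \<alpha>0 \<beta>0 (n + 1)" using A cb n by auto
      show "lm \<alpha>0 pi n < lm \<alpha>0 \<beta>0 (n + 1)" using CB[OF _ a_pi h1(3,4) i1] h1 by simp
    }
    show "lm \<alpha>0 \<beta>0 (N - 1) < lm 0 \<beta>0 (N - 1)" using A cb N2 by auto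
  next
    fix \<alpha>0 \<beta>0 assume h: "xi < \<alpha>0 \<and> \<alpha>0 < pi \<and> 0 < \<beta>0 \<and> \<beta>0 < pi"
    then have h1: "xi < \<alpha>0" "\<alpha>0 < pi" "0 < \<beta>0" "\<beta>0 < pi" by auto
    have a0: "0 \<le> \<alpha>0" using h1 xb by simp
    note A = CA'[OF h1(1,2) h1(3) less_imp_le[OF h1(4)]]
    note cb = c0b[OF h1(3,4)]
    show "lm 0 \<beta>0 0 < lm \<alpha>0 \<beta>0 0" using A cb N2 by auto
    {
      fix n assume n: "n + 2 \<le> N"
      have i1: "n < card (Zr \<alpha>0 pi)" using cap[of \<alpha>0] h1 a0 n by auto
      show "lm \<alpha>0 \<beta>0 n < lm 0 \<beta>0 (n + 1)" using A cb n by auto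
      show "lm \<alpha>0 \<beta>0 n < lm \<alpha>0 pi n" using CB[OF a0 h1(2) h1(3,4) i1] by simp
      show "lm 0 \<beta>0 (n + 1) < lm \<alpha>0 \<beta>0 (n + 1)" using A cb n by auto
      show "lm \<alpha>0 pi n < lm \<alpha>0 \<beta>0 (n + 1)" using CB[OF a0 h1(2) h1(3,4) i1] by simp
    }
  next
    fix \<beta>0 assume h: "0 < \<beta>0 \<and> \<beta>0 < pi"
    then have h1: "0 < \<beta>0" "\<beta>0 < pi" by auto
    note X = CX[OF h1(1) less_imp_le[OF h1(2)]]
    note cx = cxb[OF h1]
    have x0: "0 \<le> xi" using xb by simp
    show "lm 0 \<beta>0 0 < lm xi \<beta>0 0" using X[of 0] cx N2 by auto
    {
      fix n assume n: "n + 3 \<le> N"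
      have i1: "n < card (Zr xi pi)" using cxp n by auto
      show "lm xi \<beta>0 n < lm 0 \<beta>0 (n + 1)" using X[of n] cx n by auto
      show "lm xi \<beta>0 n < lm xi pi n" using CB[OF x0 xb(2) h1 i1] by simp
      show "lm 0 \<beta>0 (n + 1) < lm xi \<beta>0 (n + 1)" using X[of "n+1"] cx n by auto
      show "lm xi pi n < lm xi \<beta>0 (n + 1)" using CB[OF x0 xb(2) h1 i1] by simp
    }
    have "N - 2 < card (Zr xi \<beta>0)" using cx N2 by auto
    from X[OF this] have "lm xi \<beta>0 (N - 2) < lm 0 \<beta>0 (N - 2 + 1)" by simp
    moreover have "N - 2 + 1 = N - 1" using N2 by simp
    ultimately show "lm xi \<beta>0 (N - 2) < lm 0 \<beta>0 (N - 1)" by simp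
  next
    fix \<alpha>0 n assume h: "0 < \<alpha>0 \<and> \<alpha>0 < xi" and n: "n + 2 \<le> N"
    then have h1: "0 < \<alpha>0" "\<alpha>0 < xi" by auto
    note A = CA[OF h1(1,2) pi_gt_zero order_refl]
    show "lm \<alpha>0 pi n < lm 0 pi n" using A c0p n by auto
    assume "n + 3 \<le> N"
    then show "lm 0 pi n < lm \<alpha>0 pi (n + 1)" using A c0p by auto
  next
    fix \<alpha>0 n assume h: "xi < \<alpha>0 \<and> \<alpha>0 < pi" and n: "n + 2 \<le> N"
    then have h1: "xi < \<alpha>0" "\<alpha>0 < pi" by auto
    note A = CA'[OF h1(1,2) pi_gt_zero order_refl]
    show "lm 0 pi n < lm \<alpha>0 pi n" using A c0p n by auto
    assume "n + 3 \<le> N"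
    then show "lm \<alpha>0 pi n < lm 0 pi (n + 1)" using A c0p by auto
  next
    fix n assume n: "n + 3 \<le> N"
    then have "n < card (Zr xi pi)" using cxp by auto
    from CX[OF pi_gt_zero order_refl this]
    show "lm 0 pi n < lm xi pi n" "lm xi pi n < lm 0 pi (n + 1)" by auto
  next
    fix \<beta>0 n assume h: "0 < \<beta>0 \<and> \<beta>0 < pi" and n: "n + 2 \<le> N"
    then have "n < card (Zr 0 pi)" using c0p by auto
    from CB[OF order_refl pi_gt_zero _ _ this] h
    show "lm 0 \<beta>0 n < lm 0 pi n" "lm 0 pi n < lm 0 \<beta>0 (n + 1)" by auto
  qed
qed


end
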